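(* Let $n \geq 2^{17}$ be a power of $2$. Then in the Hilbert space $\mathbb{C}^n$ there exists a Kochen–Specker proof consisting of $N = 2^{n-1} + n^2/2$ projectors such that its orthogonality graph $G$ satisfies $$\theta(G) = \frac{2^{n-1}}{n} + \frac{n}{2}, \qquad \alpha(G) \leq \left(\frac{1}{2} + \frac{8\sqrt{n}\,\log n}{n-1}\right)\left(\frac{2^{n-1}}{n} + \frac{n}{2}\right).$$
   Context: A $\{0,1\}$-coloring of a finite set $S$ of unit vectors in $\mathbb{C}^n$ is a map $f: S \to \{0,1\}$ such that $\sum_{v \in O} f(v) \leq 1$ for every subset $O \subseteq S$ of mutually orthogonal vectors and $\sum_{v \in B} f(v) = 1$ for every subset $B \subseteq S$ forming an orthonormal basis of $\mathbb{C}^n$. A Kochen–Specker proof (KS set) is a finite set of unit vectors (equivalently rank-one projectors) in $\mathbb{C}^n$ admitting no $\{0,1\}$-coloring; the paper also counts as KS proofs the weak KS sets, i.e., finite sets $S$ of unit vectors such that for every $f: S\to\{0,1\}$ with $\sum_{v\in b} f(v) = 1$ for all orthonormal bases $b \subseteq S$ there exist two orthogonal $u_1, u_2 \in S$ with $f(u_1)=f(u_2)=1$. The orthogonality graph $G$ of $S$ has one vertex per vector (projector) and an edge between two vertices iff the corresponding vectors are orthogonal. $\alpha(G)$ is the independence number and $\theta(G)$ the Lovász theta number of $G$. $\log$ denotes the base-$2$ logarithm. *)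

theory Defs
  imports "HOL-Analysis.Analysis"
begin

definition cinner :: "complex ^ 'n \<Rightarrow> complex ^ 'n \<Rightarrow> complex" where
  "cinner x y = (\<Sum>i\<in>UNIV. x $ i * cnj (y $ i))"

definition corth :: "complex ^ 'n \<Rightarrow> complex ^ 'n \<Rightarrow> bool" where
  "corth x y \<longleftrightarrow> cinner x y = 0"

definition unit_vec :: "complex ^ 'n \<Rightarrow> bool" where
  "unit_vec v \<longleftrightarrow> cinner v v = 1"

definition mutually_orth :: "(complex ^ 'n) set \<Rightarrow> bool" where
  "mutually_orth O' \<longleftrightarrow> (\<forall>u\<in>O'. \<forall>v\<in>O'. u \<noteq> v \<longrightarrow> corth u v)"

definition onb :: "(complex ^ 'n) set \<Rightarrow> bool" where
  "onb B \<longleftrightarrow> (\<forall>v\<in>B. unit_vec v) \<and> mutually_orth B \<and> finite B \<and> card B = CARD('n)"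

definition zero_one_map :: "(complex ^ 'n) set \<Rightarrow> (complex ^ 'n \<Rightarrow> nat) \<Rightarrow> bool" where
  "zero_one_map S f \<longleftrightarrow> (\<forall>v\<in>S. f v \<in> {0, 1})"

definition coloring :: "(complex ^ 'n) set \<Rightarrow> (complex ^ 'n \<Rightarrow> nat) \<Rightarrow> bool" where
  "coloring S f \<longleftrightarrow> zero_one_map S f
     \<and> (\<forall>O'. O' \<subseteq> S \<and> mutually_orth O' \<longrightarrow> sum f O' \<le> 1)
     \<and> (\<forall>B. B \<subseteq> S \<and> onb B \<longrightarrow> sum f B = 1)"

definition KS_set :: "(complex ^ 'n) set \<Rightarrow> bool" where
  "KS_set S \<longleftrightarrow> finite S \<and> (\<forall>v\<in>S. unit_vec v) \<and> \<not> (\<exists>f. coloring S f)"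

definition weak_KS_set :: "(complex ^ 'n) set \<Rightarrow> bool" where
  "weak_KS_set S \<longleftrightarrow> finite S \<and> (\<forall>v\<in>S. unit_vec v) \<and>
     (\<forall>f. zero_one_map S f \<and> (\<forall>B. B \<subseteq> S \<and> onb B \<longrightarrow> sum f B = 1) \<longrightarrow>
        (\<exists>u1\<in>S. \<exists>u2\<in>S. corth u1 u2 \<and> f u1 = 1 \<and> f u2 = 1))"

definition KS_proof :: "(complex ^ 'n) set \<Rightarrow> bool" where
  "KS_proof S \<longleftrightarrow> KS_set S \<or> weak_KS_set S"

text \<open>Distinct vectors of S give distinct rank-one projectors (no two are phase multiples).\<close>
definition distinct_projectors :: "(complex ^ 'n) set \<Rightarrow> bool" where
  "distinct_projectors S \<longleftrightarrow> (\<forall>u\<in>S. \<forall>v\<in>S. \<forall>c::complex. u = c *s v \<longrightarrow> u = v)"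

definition indep_number :: "'v set \<Rightarrow> ('v \<Rightarrow> 'v \<Rightarrow> bool) \<Rightarrow> nat" where
  "indep_number V E = Max {card I | I. I \<subseteq> V \<and> (\<forall>u\<in>I. \<forall>v\<in>I. \<not> E u v)}"

text \<open>Lovasz theta via its standard SDP:
  max sum_{ij} X_ij over real symmetric PSD X on V with trace 1 and X_ij = 0 on edges.\<close>
definition lovasz_theta :: "'v set \<Rightarrow> ('v \<Rightarrow> 'v \<Rightarrow> bool) \<Rightarrow> real" where
  "lovasz_theta V E = Sup {(\<Sum>i\<in>V. \<Sum>j\<in>V. X i j) | X.
      (\<forall>i\<in>V. \<forall>j\<in>V. X i j = X j i)
    \<and> (\<forall>z. (\<Sum>i\<in>V. \<Sum>j\<in>V. z i * X i j * z j) \<ge> 0)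
    \<and> (\<Sum>i\<in>V. X i i) = 1
    \<and> (\<forall>i\<in>V. \<forall>j\<in>V. E i j \<longrightarrow> X i j = 0)}"

text \<open>Orthogonality graph edge relation (on unit vectors, orthogonal implies distinct).\<close>
definition orth_edge :: "complex ^ 'n \<Rightarrow> complex ^ 'n \<Rightarrow> bool" where
  "orth_edge u v \<longleftrightarrow> u \<noteq> v \<and> corth u v"

end

theory Submission
  imports Defs "HOL-Library.Nat_Bijection"
begin

definition rin :: "nat \<Rightarrow> (nat \<Rightarrow> real) \<Rightarrow> (nat \<Rightarrow> real) \<Rightarrow> real" where
  "rin d x y = (\<Sum>i<d. x i * y i)"
definition ten :: "nat \<Rightarrow> (nat \<Rightarrow> real) \<Rightarrow> (nat \<Rightarrow> real) \<Rightarrow> (nat \<Rightarrow> real)" where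
  "ten b x y = (\<lambda>i. x (i div b) * y (i mod b))"
definition tset :: "nat \<Rightarrow> (nat \<Rightarrow> real) set \<Rightarrow> (nat \<Rightarrow> real) set \<Rightarrow> (nat \<Rightarrow> real) set" where
  "tset b A B = (\<lambda>(x,y). ten b x y) ` (A \<times> B)"
definition supp :: "nat \<Rightarrow> (nat \<Rightarrow> real) \<Rightarrow> bool" where
  "supp d x \<longleftrightarrow> (\<forall>i\<ge>d. x i = 0)"
definition good :: "nat \<Rightarrow> (nat \<Rightarrow> real) set \<Rightarrow> bool" where
  "good d A \<longleftrightarrow> finite A \<and> (\<forall>x\<in>A. supp d x \<and> rin d x x = 1)
     \<and> (\<forall>x\<in>A. \<forall>y\<in>A. \<forall>c. x = (\<lambda>i. c * y i) \<longrightarrow> x = y)"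

lemma sum_split:
  fixes b :: nat
  assumes "0 < b"
  shows "(\<Sum>i<a*b. f (i div b) (i mod b)) = (\<Sum>p<a. \<Sum>q<b. f p q)"
proof -
  have "(\<Sum>i<a*b. f (i div b) (i mod b)) = (\<Sum>p<a. \<Sum>i\<in>{p*b..<p*b+b}. f (i div b) (i mod b))"
    by (rule sum.nat_group[symmetric])
  also have "\<dots> = (\<Sum>p<a. \<Sum>q<b. f p q)"
  proof (rule sum.cong[OF refl])
    fix p
    have "(\<Sum>i\<in>{p*b..<p*b+b}. f (i div b) (i mod b)) = (\<Sum>q\<in>{0..<b}. f ((q + p*b) div b) ((q+p*b) mod b))"
      using sum.shift_bounds_nat_ivl[of "\<lambda>i. f (i div b) (i mod b)" 0 "p*b" b] by (simp add: add.commute)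
    also have "\<dots> = (\<Sum>q<b. f p q)"
      using assms by (intro sum.cong) auto
    finally show "(\<Sum>i\<in>{p*b..<p*b+b}. f (i div b) (i mod b)) = (\<Sum>q<b. f p q)" .
  qed
  finally show ?thesis .
qed

lemma rin_ten:
  assumes "0 < b"
  shows "rin (a*b) (ten b x y) (ten b x' y') = rin a x x' * rin b y y'"
proof -
  have "rin (a*b) (ten b x y) (ten b x' y') = (\<Sum>p<a. \<Sum>q<b. (x p * x' p) * (y q * y' q))"
    unfolding rin_def ten_def using sum_split[OF assms, where a=a and f="\<lambda>p q. (x p * x' p) * (y q * y' q)"]
    by (simp add: algebra_simps)
  also have "\<dots> = rin a x x' * rin b y y'"
    unfolding rin_def by (simp add: sum_product)
  finally show ?thesis .
qed

lemma supp_ten: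
  assumes "0 < b" "supp a x"
  shows "supp (a*b) (ten b x y)"
  unfolding supp_def ten_def
proof (intro allI impI)
  fix i assume "a * b \<le> i"
  then have "a \<le> i div b" using div_le_mono[OF \<open>a * b \<le> i\<close>, of b] assms(1) by simp
  then show "x (i div b) * y (i mod b) = 0" using assms(2) unfolding supp_def by simp
qed

lemma unit_nz:
  assumes "rin d x x = 1"
  shows "\<exists>i<d. x i \<noteq> 0"
proof (rule ccontr)
  assume "\<not> ?thesis"
  then have "rin d x x = 0" unfolding rin_def by auto
  with assms show False by simp
qed

lemma ray_factor2:
  assumes b: "0 < b" and sy: "supp b y" "supp b y'" and ux: "rin a x x = 1"
    and eq: "ten b x y = (\<lambda>i. c * ten b x' y' i)"
  shows "\<exists>d. y = (\<lambda>q. d * y' q)"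
proof -
  obtain i where i: "i < a" "x i \<noteq> 0" using unit_nz[OF ux] by blast
  have "y q = (c * x' i / x i) * y' q" for q
  proof (cases "q < b")
    case True
    have "ten b x y (i*b+q) = c * ten b x' y' (i*b+q)" using eq by metis
    moreover have "(i*b+q) div b = i" "(i*b+q) mod b = q" using True b by auto
    ultimately have "x i * y q = c * (x' i * y' q)" unfolding ten_def by simp
    then show ?thesis using i(2) by (simp add: field_simps)
  next
    case False
    then show ?thesis using sy unfolding supp_def by simp
  qed
  then show ?thesis by blast
qed

lemma ray_factor1:
  assumes b: "0 < b" and sx: "supp a x" "supp a x'" and uy: "rin b y y = 1"
    and eq: "ten b x y = (\<lambda>i. c * ten b x' y' i)"
  shows "\<exists>d. x = (\<lambda>p. d * x' p)"
proof -
  obtain q where q: "q < b" "y q \<noteq> 0" using unit_nz[OF uy] by blast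
  have "x p = (c * y' q / y q) * x' p" for p
  proof -
    have "ten b x y (p*b+q) = c * ten b x' y' (p*b+q)" using eq by metis
    moreover have "(p*b+q) div b = p" "(p*b+q) mod b = q" using q b by auto
    ultimately have "x p * y q = c * (x' p * y' q)" unfolding ten_def by simp
    then show ?thesis using q(2) by (simp add: field_simps)
  qed
  then show ?thesis by blast
qed

lemma good_finite: "good d A \<Longrightarrow> finite A" by (simp add: good_def)
lemma good_supp: "good d A \<Longrightarrow> x \<in> A \<Longrightarrow> supp d x" by (simp add: good_def)
lemma good_unit: "good d A \<Longrightarrow> x \<in> A \<Longrightarrow> rin d x x = 1" by (simp add: good_def)
lemma good_ray: "good d A \<Longrightarrow> x \<in> A \<Longrightarrow> y \<in> A \<Longrightarrow> x = (\<lambda>i. c * y i) \<Longrightarrow> x = y"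
  by (simp add: good_def)

lemma ten_inj:
  assumes b: "0 < b" and A: "good a A" and B: "good b B"
    and x: "x \<in> A" "x' \<in> A" and y: "y \<in> B" "y' \<in> B" and eq: "ten b x y = ten b x' y'"
  shows "x = x' \<and> y = y'"
proof -
  have eq1: "ten b x y = (\<lambda>i. 1 * ten b x' y' i)" using eq by simp
  obtain d where "x = (\<lambda>p. d * x' p)"
    using ray_factor1[OF b good_supp[OF A x(1)] good_supp[OF A x(2)] good_unit[OF B y(1)] eq1] by blast
  then have xx: "x = x'" using good_ray[OF A x] by blast
  obtain d' where "y = (\<lambda>p. d' * y' p)"
    using ray_factor2[OF b good_supp[OF B y(1)] good_supp[OF B y(2)] good_unit[OF A x(1)] eq1] by blast
  then have "y = y'" using good_ray[OF B y] by blast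
  with xx show ?thesis by simp
qed

lemma inj_tset:
  assumes b: "0 < b" and A: "good a A" and B: "good b B"
  shows "inj_on (\<lambda>(x,y). ten b x y) (A \<times> B)"
  using ten_inj[OF b A B] unfolding inj_on_def by auto

lemma sum_tset:
  assumes b: "0 < b" and A: "good a A" and B: "good b B"
  shows "sum g (tset b A B) = (\<Sum>x\<in>A. \<Sum>y\<in>B. g (ten b x y))"
proof -
  have "sum g (tset b A B) = (\<Sum>p\<in>A\<times>B. g (case p of (x,y) \<Rightarrow> ten b x y))"
    unfolding tset_def by (subst sum.reindex[OF inj_tset[OF assms]]) (simp add: comp_def)
  also have "\<dots> = (\<Sum>x\<in>A. \<Sum>y\<in>B. g (ten b x y))"
    by (simp add: sum.cartesian_product prod.case_distrib)
  finally show ?thesis .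
qed

lemma card_tset:
  assumes b: "0 < b" and A: "good a A" and B: "good b B"
  shows "card (tset b A B) = card A * card B"
  unfolding tset_def using card_image[OF inj_tset[OF assms]] by (simp add: card_cartesian_product)

lemma good_ten:
  assumes b: "0 < b" and A: "good a A" and B: "good b B"
  shows "good (a*b) (tset b A B)"
proof -
  have "finite (tset b A B)" unfolding tset_def using good_finite[OF A] good_finite[OF B] by simp
  moreover have "\<forall>z\<in>tset b A B. supp (a*b) z \<and> rin (a*b) z z = 1"
  proof
    fix z assume "z \<in> tset b A B"
    then obtain x y where xy: "x \<in> A" "y \<in> B" "z = ten b x y" unfolding tset_def by auto
    have "supp (a*b) z" using supp_ten[OF b good_supp[OF A xy(1)]] xy(3) by simp
    moreover have "rin (a*b) z z = 1" using rin_ten[OF b, of a x y x y] good_unit[OF A xy(1)] good_unit[OF B xy(2)] xy(3) by simp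
    ultimately show "supp (a*b) z \<and> rin (a*b) z z = 1" by simp
  qed
  moreover have "z = w" if z: "z \<in> tset b A B" and w: "w \<in> tset b A B" and zw: "z = (\<lambda>i. c * w i)" for z w c
  proof -
    obtain x y where xy: "x \<in> A" "y \<in> B" "z = ten b x y" using z unfolding tset_def by auto
    obtain x' y' where xy': "x' \<in> A" "y' \<in> B" "w = ten b x' y'" using w unfolding tset_def by auto
    have eq: "ten b x y = (\<lambda>i. c * ten b x' y' i)" using zw xy xy' by simp
    obtain d where "x = (\<lambda>p. d * x' p)"
      using ray_factor1[OF b good_supp[OF A xy(1)] good_supp[OF A xy'(1)] good_unit[OF B xy(2)] eq] by blast
    then have "x = x'" using good_ray[OF A xy(1) xy'(1)] by blast
    obtain d' where "y = (\<lambda>p. d' * y' p)"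
      using ray_factor2[OF b good_supp[OF B xy(2)] good_supp[OF B xy'(2)] good_unit[OF A xy(1)] eq] by blast
    then have "y = y'" using good_ray[OF B xy(2) xy'(2)] by blast
    show ?thesis using \<open>x = x'\<close> \<open>y = y'\<close> xy xy' by simp
  qed
  ultimately show ?thesis unfolding good_def by blast
qed

definition frame :: "nat \<Rightarrow> (nat \<Rightarrow> real) set \<Rightarrow> real \<Rightarrow> bool" where
  "frame d A w \<longleftrightarrow> (\<forall>i<d. \<forall>j<d. (\<Sum>x\<in>A. x i * x j) = (if i = j then w else 0))"
definition orthset :: "nat \<Rightarrow> (nat \<Rightarrow> real) set \<Rightarrow> bool" where
  "orthset d C \<longleftrightarrow> (\<forall>x\<in>C. \<forall>y\<in>C. x \<noteq> y \<longrightarrow> rin d x y = 0)"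
definition indep :: "nat \<Rightarrow> (nat \<Rightarrow> real) set \<Rightarrow> bool" where
  "indep d I \<longleftrightarrow> (\<forall>x\<in>I. \<forall>y\<in>I. x \<noteq> y \<longrightarrow> rin d x y \<noteq> 0)"
definition alpha_le :: "nat \<Rightarrow> (nat \<Rightarrow> real) set \<Rightarrow> nat \<Rightarrow> bool" where
  "alpha_le d A a \<longleftrightarrow> (\<forall>I. I \<subseteq> A \<and> indep d I \<longrightarrow> card I \<le> a)"
definition isbasis :: "nat \<Rightarrow> (nat \<Rightarrow> real) set \<Rightarrow> (nat \<Rightarrow> real) set \<Rightarrow> bool" where
  "isbasis d A C \<longleftrightarrow> C \<subseteq> A \<and> orthset d C \<and> card C = d"
definition hasbasis :: "nat \<Rightarrow> (nat \<Rightarrow> real) set \<Rightarrow> bool" where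
  "hasbasis d A \<longleftrightarrow> (\<exists>C. isbasis d A C)"
definition KSp :: "nat \<Rightarrow> (nat \<Rightarrow> real) set \<Rightarrow> bool" where
  "KSp d A \<longleftrightarrow> \<not> (\<exists>g :: (nat \<Rightarrow> real) \<Rightarrow> nat. \<forall>C. isbasis d A C \<longrightarrow> sum g C = 1)"
definition cover :: "nat \<Rightarrow> (nat \<Rightarrow> real) set \<Rightarrow> real \<Rightarrow> bool" where
  "cover d A w \<longleftrightarrow> (\<exists>(K :: nat set) cl wt. finite K \<and>
     (\<forall>k\<in>K. cl k \<subseteq> A \<and> orthset d (cl k) \<and> 0 \<le> wt k) \<and>
     (\<forall>x\<in>A. (\<Sum>k\<in>{k\<in>K. x \<in> cl k}. wt k) = 1) \<and> (\<Sum>k\<in>K. wt k) = w)"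

lemma tsetI: "x \<in> A \<Longrightarrow> y \<in> B \<Longrightarrow> ten b x y \<in> tset b A B"
  unfolding tset_def by auto

lemma tsetE: "z \<in> tset b A B \<Longrightarrow> (\<And>x y. x \<in> A \<Longrightarrow> y \<in> B \<Longrightarrow> z = ten b x y \<Longrightarrow> P) \<Longrightarrow> P"
  unfolding tset_def by auto

lemma tset_mono: "A \<subseteq> A' \<Longrightarrow> B \<subseteq> B' \<Longrightarrow> tset b A B \<subseteq> tset b A' B'"
  unfolding tset_def by auto

lemma good_subset: "good d A \<Longrightarrow> C \<subseteq> A \<Longrightarrow> good d C"
proof -
  assume A: "good d A" and C: "C \<subseteq> A"
  have "finite C" using A C finite_subset unfolding good_def by blast
  moreover have "\<forall>x\<in>C. supp d x \<and> rin d x x = 1" using A C unfolding good_def by blast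
  moreover have "\<forall>x\<in>C. \<forall>y\<in>C. \<forall>c. x = (\<lambda>i. c * y i) \<longrightarrow> x = y"
    using A C unfolding good_def by blast
  ultimately show "good d C" unfolding good_def by blast
qed

lemma frame_ten:
  assumes b: "0 < b" and A: "good a A" and B: "good b B" and fA: "frame a A wa" and fB: "frame b B wb"
  shows "frame (a*b) (tset b A B) (wa * wb)"
  unfolding frame_def
proof (intro allI impI)
  fix i j assume i: "i < a*b" and j: "j < a*b"
  have id: "i div b < a" "j div b < a" using i j b by (auto simp: less_mult_imp_div_less)
  have im: "i mod b < b" "j mod b < b" using b by auto
  have "(\<Sum>z\<in>tset b A B. z i * z j) = (\<Sum>x\<in>A. \<Sum>y\<in>B. (x (i div b) * x (j div b)) * (y (i mod b) * y (j mod b)))"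
    by (subst sum_tset[OF b A B]) (simp add: ten_def algebra_simps)
  also have "\<dots> = (\<Sum>x\<in>A. x (i div b) * x (j div b)) * (\<Sum>y\<in>B. y (i mod b) * y (j mod b))"
    by (simp add: sum_product)
  also have "\<dots> = (if i div b = j div b then wa else 0) * (if i mod b = j mod b then wb else 0)"
    using fA fB id im unfolding frame_def by simp
  also have "\<dots> = (if i = j then wa * wb else 0)"
    by (metis div_mod_decomp mult_zero_left mult_zero_right)
  finally show "(\<Sum>z\<in>tset b A B. z i * z j) = (if i = j then wa * wb else 0)" .
qed

lemma orthset_ten:
  assumes b: "0 < b" and A: "good a A" and B: "good b B" and C: "C \<subseteq> A" "orthset a C"
    and D: "D \<subseteq> B" "orthset b D"
  shows "orthset (a*b) (tset b C D)"
  unfolding orthset_def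
proof (intro ballI impI)
  fix z w assume z: "z \<in> tset b C D" and w: "w \<in> tset b C D" and zw: "z \<noteq> w"
  obtain x y where xy: "x \<in> C" "y \<in> D" "z = ten b x y" using z by (rule tsetE)
  obtain x' y' where xy': "x' \<in> C" "y' \<in> D" "w = ten b x' y'" using w by (rule tsetE)
  have "x \<noteq> x' \<or> y \<noteq> y'" using zw xy xy' by auto
  then have "rin a x x' = 0 \<or> rin b y y' = 0" using C D xy xy' unfolding orthset_def by auto
  then show "rin (a*b) z w = 0" using rin_ten[OF b] xy xy' by auto
qed

lemma isbasis_ten:
  assumes b: "0 < b" and A: "good a A" and B: "good b B" and C: "isbasis a A C" and D: "isbasis b B D"
  shows "isbasis (a*b) (tset b A B) (tset b C D)"
proof -
  have CA: "C \<subseteq> A" and DB: "D \<subseteq> B" using C D unfolding isbasis_def by auto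
  have "card (tset b C D) = card C * card D"
    using card_tset[OF b good_subset[OF A CA] good_subset[OF B DB]] .
  then show ?thesis using C D CA DB orthset_ten[OF b A B] tset_mono[OF CA DB] unfolding isbasis_def by auto
qed

lemma hasbasis_ten:
  assumes b: "0 < b" and A: "good a A" and B: "good b B" and "hasbasis a A" "hasbasis b B"
  shows "hasbasis (a*b) (tset b A B)"
  using assms isbasis_ten[OF b A B] unfolding hasbasis_def by blast

lemma alpha_ten:
  assumes b: "0 < b" and A: "good a A" and B: "good b B" and aA: "alpha_le a A na" and aB: "alpha_le b B nb"
  shows "alpha_le (a*b) (tset b A B) (na * nb)"
  unfolding alpha_le_def
proof (intro allI impI)
  fix I assume I: "I \<subseteq> tset b A B \<and> indep (a*b) I"
  define P where "P = {p \<in> A \<times> B. ten b (fst p) (snd p) \<in> I}"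
  define U where "U = fst ` P"
  define F where "F x = {y \<in> B. (x, y) \<in> P}" for x
  have finA: "finite A" and finB: "finite B" using A B by (auto simp: good_def)
  have finP: "finite P" unfolding P_def using finA finB by (auto intro: finite_subset)
  have IP: "I = (\<lambda>p. ten b (fst p) (snd p)) ` P"
  proof
    show "I \<subseteq> (\<lambda>p. ten b (fst p) (snd p)) ` P"
    proof
      fix z assume "z \<in> I"
      then have "z \<in> tset b A B" using I by auto
      then obtain x y where "x \<in> A" "y \<in> B" "z = ten b x y" by (rule tsetE)
      then show "z \<in> (\<lambda>p. ten b (fst p) (snd p)) ` P" unfolding P_def using \<open>z \<in> I\<close> by force
    qed
  qed (auto simp: P_def)
  have key: "rin a x x' * rin b y y' \<noteq> 0" if "(x,y) \<in> P" "(x',y') \<in> P" for x y x' y'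
  proof -
    have m: "x \<in> A" "y \<in> B" "x' \<in> A" "y' \<in> B" "ten b x y \<in> I" "ten b x' y' \<in> I"
      using that unfolding P_def by auto
    have "rin (a*b) (ten b x y) (ten b x' y') \<noteq> 0"
    proof (cases "ten b x y = ten b x' y'")
      case True
      then show ?thesis using rin_ten[OF b, of a x y x y] good_unit[OF A m(1)] good_unit[OF B m(2)] by simp
    next
      case False
      then show ?thesis using I m unfolding indep_def by blast
    qed
    then show ?thesis using rin_ten[OF b] by simp
  qed
  have U_ind: "U \<subseteq> A \<and> indep a U"
    unfolding U_def indep_def using key by (force simp: P_def)
  then have cU: "card U \<le> na" using aA unfolding alpha_le_def by blast
  have cF: "card (F x) \<le> nb" if "x \<in> U" for x
  proof -
    have "F x \<subseteq> B \<and> indep b (F x)"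
      unfolding F_def indep_def using key[of x] by auto
    then show ?thesis using aB unfolding alpha_le_def by blast
  qed
  have "P \<subseteq> Sigma U F" unfolding U_def F_def P_def by force
  have finU: "finite U" unfolding U_def using finP by simp
  have finF: "finite (F x)" for x unfolding F_def using finB by simp
  have "card P \<le> card (Sigma U F)"
    by (rule card_mono) (use finU finF \<open>P \<subseteq> Sigma U F\<close> in auto)
  also have "\<dots> = (\<Sum>x\<in>U. card (F x))"
    by (rule card_SigmaI) (use finU finF in auto)
  also have "\<dots> \<le> (\<Sum>x\<in>U. nb)" by (rule sum_mono) (rule cF)
  also have "\<dots> = card U * nb" by simp
  also have "\<dots> \<le> na * nb" using cU by simp
  finally have "card P \<le> na * nb" .
  moreover have "card I \<le> card P" unfolding IP by (rule card_image_le[OF finP])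
  ultimately show "card I \<le> na * nb" by simp
qed

lemma KS_ten:
  assumes b: "0 < b" and A: "good a A" and B: "good b B" and KA: "KSp a A"
    and hA: "hasbasis a A" and hB: "hasbasis b B"
  shows "KSp (a*b) (tset b A B)"
  unfolding KSp_def
proof
  assume "\<exists>g :: (nat \<Rightarrow> real) \<Rightarrow> nat. \<forall>C. isbasis (a*b) (tset b A B) C \<longrightarrow> sum g C = 1"
  then obtain g :: "(nat \<Rightarrow> real) \<Rightarrow> nat" where g: "\<And>C. isbasis (a*b) (tset b A B) C \<Longrightarrow> sum g C = 1" by blast
  obtain C0 where C0: "isbasis a A C0" using hA unfolding hasbasis_def by blast
  obtain D where D: "isbasis b B D" using hB unfolding hasbasis_def by blast
  have C0A: "C0 \<subseteq> A" and DB: "D \<subseteq> B" using C0 D unfolding isbasis_def by auto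
  have gC0: "good a C0" using good_subset[OF A C0A] .
  have gD: "good b D" using good_subset[OF B DB] .
  have finD: "finite D" using gD by (simp add: good_def)
  define h where "h e = (\<Sum>c\<in>C0. g (ten b c e))" for e
  have "1 = sum g (tset b C0 D)" using g[OF isbasis_ten[OF b A B C0 D]] by simp
  also have "\<dots> = (\<Sum>c\<in>C0. \<Sum>e\<in>D. g (ten b c e))" by (rule sum_tset[OF b gC0 gD])
  also have "\<dots> = (\<Sum>e\<in>D. h e)" unfolding h_def by (rule sum.swap)
  finally have sD: "(\<Sum>e\<in>D. h e) = 1" by simp
  then obtain e0 where e0: "e0 \<in> D" "h e0 \<noteq> 0"
    by (metis one_neq_zero sum.neutral)
  have split: "(\<Sum>e\<in>D. h e) = h e0 + (\<Sum>e\<in>D - {e0}. h e)"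
    using sum.remove[OF finD e0(1)] .
  have rest0: "(\<Sum>e\<in>D - {e0}. h e) = 0" and he0: "h e0 = 1" using sD split e0(2) by linarith+
  define g' where "g' c = g (ten b c e0)" for c
  have "sum g' C = 1" if C: "isbasis a A C" for C
  proof -
    have CA: "C \<subseteq> A" using C unfolding isbasis_def by auto
    have gC: "good a C" using good_subset[OF A CA] .
    have ge0: "good b {e0}" using good_subset[OF B] e0(1) DB by auto
    have gD': "good b (D - {e0})" using good_subset[OF B, of "D - {e0}"] DB by blast
    define Z where "Z = tset b C {e0} \<union> tset b C0 (D - {e0})"
    have disj: "tset b C {e0} \<inter> tset b C0 (D - {e0}) = {}"
    proof (rule ccontr)
      assume "\<not> ?thesis"
      then obtain z where z1: "z \<in> tset b C {e0}" and z2: "z \<in> tset b C0 (D - {e0})" by blast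
      obtain x where x: "x \<in> C" "z = ten b x e0" using z1 by (auto elim: tsetE)
      obtain x' y' where x': "x' \<in> C0" "y' \<in> D - {e0}" "z = ten b x' y'" using z2 by (elim tsetE) blast
      have "e0 = y'" using ten_inj[OF b A B, of x x' e0 y'] x x' CA C0A e0(1) DB by auto
      then show False using x' by simp
    qed
    have finZ1: "finite (tset b C {e0})" and finZ2: "finite (tset b C0 (D - {e0}))"
      unfolding tset_def using gC gC0 finD by (auto simp: good_def)
    have cardZ: "card Z = a * b"
    proof -
      have "card Z = card (tset b C {e0}) + card (tset b C0 (D - {e0}))"
        unfolding Z_def using card_Un_disjoint[OF finZ1 finZ2 disj] .
      also have "\<dots> = card C * 1 + card C0 * card (D - {e0})"
        using card_tset[OF b gC ge0] card_tset[OF b gC0 gD'] by simp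
      also have "\<dots> = a + a * (b - 1)"
        using C C0 D e0(1) finD unfolding isbasis_def by simp
      also have "\<dots> = a * b" using b by (cases b) (auto simp: algebra_simps)
      finally show ?thesis .
    qed
    have orthZ: "orthset (a*b) Z"
      unfolding orthset_def
    proof (intro ballI impI)
      fix z w assume z: "z \<in> Z" and w: "w \<in> Z" and zw: "z \<noteq> w"
      obtain x y where xy: "z = ten b x y" "y \<in> D" "(y = e0 \<and> x \<in> C) \<or> (y \<noteq> e0 \<and> x \<in> C0)"
        using z e0(1) unfolding Z_def by (auto elim!: tsetE)
      obtain x' y' where xy': "w = ten b x' y'" "y' \<in> D" "(y' = e0 \<and> x' \<in> C) \<or> (y' \<noteq> e0 \<and> x' \<in> C0)"
        using w e0(1) unfolding Z_def by (auto elim!: tsetE)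
      show "rin (a*b) z w = 0"
      proof (cases "y = y'")
        case True
        then have "x \<noteq> x'" using zw xy xy' by auto
        moreover have "(x \<in> C \<and> x' \<in> C) \<or> (x \<in> C0 \<and> x' \<in> C0)" using xy xy' True by auto
        ultimately have "rin a x x' = 0" using C C0 unfolding isbasis_def orthset_def by auto
        then show ?thesis using xy xy' rin_ten[OF b] by simp
      next
        case False
        then have "rin b y y' = 0" using D xy xy' unfolding isbasis_def orthset_def by auto
        then show ?thesis using xy xy' rin_ten[OF b] by simp
      qed
    qed
    have ZA: "Z \<subseteq> tset b A B"
      unfolding Z_def using tset_mono[OF CA, of "{e0}" B] tset_mono[OF C0A, of "D - {e0}" B] e0(1) DB by auto
    have "isbasis (a*b) (tset b A B) Z" unfolding isbasis_def using ZA orthZ cardZ by simp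
    then have "1 = sum g Z" using g by simp
    also have "\<dots> = sum g (tset b C {e0}) + sum g (tset b C0 (D - {e0}))"
      unfolding Z_def by (rule sum.union_disjoint[OF finZ1 finZ2 disj])
    also have "sum g (tset b C {e0}) = sum g' C"
      using sum_tset[OF b gC ge0] unfolding g'_def by simp
    also have "sum g (tset b C0 (D - {e0})) = (\<Sum>e\<in>D - {e0}. h e)"
      using sum_tset[OF b gC0 gD'] unfolding h_def by (simp add: sum.swap[of _ C0])
    finally show ?thesis using rest0 by simp
  qed
  then show False using KA unfolding KSp_def by blast
qed

lemma KS_mono:
  assumes "KSp d A" "A \<subseteq> A'"
  shows "KSp d A'"
  using assms unfolding KSp_def isbasis_def by blast

lemma cover_ten:
  assumes b: "0 < b" and A: "good a A" and B: "good b B" and cA: "cover a A wa" and cB: "cover b B wb"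
  shows "cover (a*b) (tset b A B) (wa * wb)"
proof -
  obtain K1 :: "nat set" and cl1 and wt1 :: "nat \<Rightarrow> real" where c1: "finite K1" "\<forall>k\<in>K1. cl1 k \<subseteq> A \<and> orthset a (cl1 k) \<and> 0 \<le> wt1 k"
    "\<forall>x\<in>A. (\<Sum>k\<in>{k\<in>K1. x \<in> cl1 k}. wt1 k) = 1" "(\<Sum>k\<in>K1. wt1 k) = wa"
    using cA unfolding cover_def by blast
  obtain K2 :: "nat set" and cl2 and wt2 :: "nat \<Rightarrow> real" where c2: "finite K2" "\<forall>k\<in>K2. cl2 k \<subseteq> B \<and> orthset b (cl2 k) \<and> 0 \<le> wt2 k"
    "\<forall>x\<in>B. (\<Sum>k\<in>{k\<in>K2. x \<in> cl2 k}. wt2 k) = 1" "(\<Sum>k\<in>K2. wt2 k) = wb"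
    using cB unfolding cover_def by blast
  define K where "K = prod_encode ` (K1 \<times> K2)"
  define cl where "cl k = (case prod_decode k of (k1, k2) \<Rightarrow> tset b (cl1 k1) (cl2 k2))" for k
  define wt where "wt k = (case prod_decode k of (k1, k2) \<Rightarrow> wt1 k1 * wt2 k2)" for k
  have inj: "inj_on prod_encode X" for X using inj_prod_encode inj_on_subset by blast
  have sumK: "(\<Sum>k\<in>prod_encode ` X. f k) = (\<Sum>(k1,k2)\<in>X. f (prod_encode (k1,k2)))" for X and f :: "nat \<Rightarrow> real"
    by (subst sum.reindex[OF inj]) (simp add: split_beta)
  have "finite K" unfolding K_def using c1(1) c2(1) by simp
  moreover have "\<forall>k\<in>K. cl k \<subseteq> tset b A B \<and> orthset (a*b) (cl k) \<and> 0 \<le> wt k"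
  proof
    fix k assume "k \<in> K"
    then obtain k1 k2 where k: "k = prod_encode (k1,k2)" "k1 \<in> K1" "k2 \<in> K2" unfolding K_def by auto
    show "cl k \<subseteq> tset b A B \<and> orthset (a*b) (cl k) \<and> 0 \<le> wt k"
      unfolding cl_def wt_def using k c1(2) c2(2) tset_mono orthset_ten[OF b A B] by simp
  qed
  moreover have "\<forall>z\<in>tset b A B. (\<Sum>k\<in>{k\<in>K. z \<in> cl k}. wt k) = 1"
  proof
    fix z assume "z \<in> tset b A B"
    then obtain x y where xy: "x \<in> A" "y \<in> B" "z = ten b x y" by (rule tsetE)
    have mem: "z \<in> tset b (cl1 k1) (cl2 k2) \<longleftrightarrow> x \<in> cl1 k1 \<and> y \<in> cl2 k2" if "k1 \<in> K1" "k2 \<in> K2" for k1 k2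
    proof
      assume "z \<in> tset b (cl1 k1) (cl2 k2)"
      then obtain x' y' where "x' \<in> cl1 k1" "y' \<in> cl2 k2" "z = ten b x' y'" by (rule tsetE)
      moreover have "x' \<in> A" "y' \<in> B" using calculation that c1(2) c2(2) by auto
      ultimately show "x \<in> cl1 k1 \<and> y \<in> cl2 k2" using ten_inj[OF b A B, of x x' y y'] xy by auto
    qed (use xy in \<open>auto intro: tsetI\<close>)
    have "{k\<in>K. z \<in> cl k} = prod_encode ` ({k1\<in>K1. x \<in> cl1 k1} \<times> {k2\<in>K2. y \<in> cl2 k2})"
      unfolding K_def cl_def using mem by auto
    then have "(\<Sum>k\<in>{k\<in>K. z \<in> cl k}. wt k) = (\<Sum>(k1,k2)\<in>{k1\<in>K1. x \<in> cl1 k1} \<times> {k2\<in>K2. y \<in> cl2 k2}. wt1 k1 * wt2 k2)"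
      using sumK unfolding wt_def by simp
    also have "\<dots> = (\<Sum>k1\<in>{k1\<in>K1. x \<in> cl1 k1}. wt1 k1) * (\<Sum>k2\<in>{k2\<in>K2. y \<in> cl2 k2}. wt2 k2)"
      by (simp add: sum.cartesian_product[symmetric] sum_product)
    also have "\<dots> = 1" using c1(3) c2(3) xy by simp
    finally show "(\<Sum>k\<in>{k\<in>K. z \<in> cl k}. wt k) = 1" .
  qed
  moreover have "(\<Sum>k\<in>K. wt k) = wa * wb"
  proof -
    have "(\<Sum>k\<in>K. wt k) = (\<Sum>(k1,k2)\<in>K1 \<times> K2. wt1 k1 * wt2 k2)"
      unfolding K_def using sumK unfolding wt_def by simp
    also have "\<dots> = wa * wb" using c1(4) c2(4) sum_product[of wt1 K1 wt2 K2]
      by (simp add: sum.cartesian_product[symmetric])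
    finally show ?thesis .
  qed
  ultimately show ?thesis unfolding cover_def by blast
qed

lemma good_union:
  assumes A: "good d A" and A': "good d A'"
    and cr: "\<And>x y c. x \<in> A \<Longrightarrow> y \<in> A' \<Longrightarrow> x \<noteq> (\<lambda>i. c * y i)"
    and cr': "\<And>x y c. x \<in> A' \<Longrightarrow> y \<in> A \<Longrightarrow> x \<noteq> (\<lambda>i. c * y i)"
  shows "good d (A \<union> A')"
proof -
  have "finite (A \<union> A')" using A A' by (simp add: good_def)
  moreover have "\<forall>x\<in>A \<union> A'. supp d x \<and> rin d x x = 1" using A A' by (auto simp: good_def)
  moreover have "x = y" if "x \<in> A \<union> A'" "y \<in> A \<union> A'" "x = (\<lambda>i. c * y i)" for x y c
    using that A A' cr cr' unfolding good_def by blast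
  ultimately show ?thesis unfolding good_def by blast
qed

lemma frame_union:
  assumes A: "good d A" and A': "good d A'" and disj: "A \<inter> A' = {}"
    and f: "frame d A w" and f': "frame d A' w'"
  shows "frame d (A \<union> A') (w + w')"
  unfolding frame_def
proof (intro allI impI)
  fix i j assume "i < d" "j < d"
  have "(\<Sum>x\<in>A \<union> A'. x i * x j) = (\<Sum>x\<in>A. x i * x j) + (\<Sum>x\<in>A'. x i * x j)"
    using A A' disj by (intro sum.union_disjoint) (auto simp: good_def)
  then show "(\<Sum>x\<in>A \<union> A'. x i * x j) = (if i = j then w + w' else 0)"
    using f f' \<open>i < d\<close> \<open>j < d\<close> unfolding frame_def by simp
qed

lemma indep_subset: "indep d I \<Longrightarrow> J \<subseteq> I \<Longrightarrow> indep d J"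
  unfolding indep_def by blast

lemma alpha_union:
  assumes "alpha_le d A p" "alpha_le d A' q"
  shows "alpha_le d (A \<union> A') (p + q)"
  unfolding alpha_le_def
proof (intro allI impI)
  fix I assume I: "I \<subseteq> A \<union> A' \<and> indep d I"
  have "card (I \<inter> A) \<le> p" using assms(1) I indep_subset[of d I "I \<inter> A"] unfolding alpha_le_def by blast
  moreover have "card (I \<inter> A') \<le> q" using assms(2) I indep_subset[of d I "I \<inter> A'"] unfolding alpha_le_def by blast
  moreover have "I = (I \<inter> A) \<union> (I \<inter> A')" using I by blast
  then have "card I \<le> card (I \<inter> A) + card (I \<inter> A')" by (metis card_Un_le)
  ultimately show "card I \<le> p + q" by simp
qed

lemma cover_union:
  assumes disj: "A \<inter> A' = {}" and cA: "cover d A w" and cA': "cover d A' w'"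
  shows "cover d (A \<union> A') (w + w')"
proof -
  obtain K1 :: "nat set" and cl1 and wt1 :: "nat \<Rightarrow> real" where c1: "finite K1" "\<forall>k\<in>K1. cl1 k \<subseteq> A \<and> orthset d (cl1 k) \<and> 0 \<le> wt1 k"
    "\<forall>x\<in>A. (\<Sum>k\<in>{k\<in>K1. x \<in> cl1 k}. wt1 k) = 1" "(\<Sum>k\<in>K1. wt1 k) = w"
    using cA unfolding cover_def by blast
  obtain K2 :: "nat set" and cl2 and wt2 :: "nat \<Rightarrow> real" where c2: "finite K2" "\<forall>k\<in>K2. cl2 k \<subseteq> A' \<and> orthset d (cl2 k) \<and> 0 \<le> wt2 k"
    "\<forall>x\<in>A'. (\<Sum>k\<in>{k\<in>K2. x \<in> cl2 k}. wt2 k) = 1" "(\<Sum>k\<in>K2. wt2 k) = w'"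
    using cA' unfolding cover_def by blast
  define K where "K = (\<lambda>k. 2*k) ` K1 \<union> (\<lambda>k. 2*k+1) ` K2"
  define cl where "cl k = (if even k then cl1 (k div 2) else cl2 (k div 2))" for k
  define wt where "wt k = (if even k then wt1 (k div 2) else wt2 (k div 2))" for k
  have inj1: "inj_on (\<lambda>k::nat. 2*k) X" for X by (auto simp: inj_on_def)
  have inj2: "inj_on (\<lambda>k::nat. 2*k+1) X" for X by (auto simp: inj_on_def)
  have dj: "(\<lambda>k::nat. 2*k) ` X \<inter> (\<lambda>k. 2*k+1) ` Y = {}" for X Y by auto presburger
  have s1: "(\<Sum>k\<in>(\<lambda>k. 2*k) ` X. wt k) = (\<Sum>k\<in>X. wt1 k)" for X
    by (subst sum.reindex[OF inj1]) (simp add: wt_def)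
  have s2: "(\<Sum>k\<in>(\<lambda>k. 2*k+1) ` X. wt k) = (\<Sum>k\<in>X. wt2 k)" for X
    by (subst sum.reindex[OF inj2]) (simp add: wt_def)
  have "finite K" unfolding K_def using c1(1) c2(1) by simp
  moreover have "\<forall>k\<in>K. cl k \<subseteq> A \<union> A' \<and> orthset d (cl k) \<and> 0 \<le> wt k"
    unfolding K_def cl_def wt_def using c1(2) c2(2) by auto
  moreover have "\<forall>x\<in>A \<union> A'. (\<Sum>k\<in>{k\<in>K. x \<in> cl k}. wt k) = 1"
  proof
    fix x assume x: "x \<in> A \<union> A'"
    show "(\<Sum>k\<in>{k\<in>K. x \<in> cl k}. wt k) = 1"
    proof (cases "x \<in> A")
      case True
      then have "x \<notin> A'" using disj by blast
      then have "{k\<in>K. x \<in> cl k} = (\<lambda>k. 2*k) ` {k\<in>K1. x \<in> cl1 k}"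
        unfolding K_def cl_def using c2(2) by auto
      then show ?thesis using s1 c1(3) True by simp
    next
      case False
      then have xA': "x \<in> A'" using x by blast
      then have "{k\<in>K. x \<in> cl k} = (\<lambda>k. 2*k+1) ` {k\<in>K2. x \<in> cl2 k}"
        unfolding K_def cl_def using c1(2) False by auto
      then show ?thesis using s2 c2(3) xA' by simp
    qed
  qed
  moreover have "(\<Sum>k\<in>K. wt k) = w + w'"
  proof -
    have "(\<Sum>k\<in>K. wt k) = (\<Sum>k\<in>(\<lambda>k. 2*k)`K1. wt k) + (\<Sum>k\<in>(\<lambda>k. 2*k+1)`K2. wt k)"
      unfolding K_def by (rule sum.union_disjoint[OF _ _ dj]) (simp_all add: c1(1) c2(1))
    then show ?thesis using s1 s2 c1(4) c2(4) by simp
  qed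
  ultimately show ?thesis unfolding cover_def by blast
qed

lemma card_frame:
  assumes A: "good d A" and f: "frame d A w"
  shows "real (card A) = w * real d"
proof -
  have "real (card A) = (\<Sum>x\<in>A. rin d x x)" using A by (simp add: good_def)
  also have "\<dots> = (\<Sum>i<d. \<Sum>x\<in>A. x i * x i)" unfolding rin_def by (rule sum.swap)
  also have "\<dots> = (\<Sum>i<d. w)" using f unfolding frame_def by simp
  finally show ?thesis by simp
qed

lemma alpha_cliques:
  assumes fin: "finite K" and cov: "A \<subseteq> (\<Union>k\<in>K. cl k)" and orth: "\<And>k. k \<in> K \<Longrightarrow> orthset d (cl k)"
  shows "alpha_le d A (card K)"
  unfolding alpha_le_def
proof (intro allI impI)
  fix I assume I: "I \<subseteq> A \<and> indep d I"
  have sub1: "\<exists>z. I \<inter> cl k \<subseteq> {z}" if "k \<in> K" for k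
  proof -
    have "x = y" if "x \<in> I \<inter> cl k" "y \<in> I \<inter> cl k" for x y
      using I orth[OF \<open>k \<in> K\<close>] that unfolding indep_def orthset_def by blast
    then show ?thesis by blast
  qed
  have le1: "card (I \<inter> cl k) \<le> 1" and fk: "finite (I \<inter> cl k)" if kK: "k \<in> K" for k
  proof -
    obtain z where "I \<inter> cl k \<subseteq> {z}" using sub1[OF kK] by blast
    then show "card (I \<inter> cl k) \<le> 1" "finite (I \<inter> cl k)"
      using card_mono[of "{z}" "I \<inter> cl k"] finite_subset by auto
  qed
  have "I \<subseteq> (\<Union>k\<in>K. I \<inter> cl k)" using I cov by blast
  moreover have finU: "finite (\<Union>k\<in>K. I \<inter> cl k)" using fin fk by (intro finite_UN_I)
  ultimately have "card I \<le> card (\<Union>k\<in>K. I \<inter> cl k)"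
    using card_mono by blast
  also have "\<dots> \<le> (\<Sum>k\<in>K. card (I \<inter> cl k))" by (rule card_UN_le[OF fin])
  also have "\<dots> \<le> (\<Sum>k\<in>K. 1)" by (rule sum_mono) (rule le1)
  finally show "card I \<le> card K" by simp
qed

definition ev :: "nat \<Rightarrow> nat \<Rightarrow> real" where "ev x = (\<lambda>i. if i = x then 1 else 0)"
definition Eset :: "nat \<Rightarrow> (nat \<Rightarrow> real) set" where "Eset d = ev ` {..<d}"

lemma rin_ev: "x < d \<Longrightarrow> y < d \<Longrightarrow> rin d (ev x) (ev y) = (if x = y then 1 else 0)"
  unfolding rin_def ev_def by (simp add: if_distrib[of "\<lambda>u. u * _"] cong: if_cong)

lemma ev_par: "ev x = (\<lambda>i. c * ev y i) \<Longrightarrow> x = y"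
proof -
  assume "ev x = (\<lambda>i. c * ev y i)"
  then have "ev x x = c * ev y x" by metis
  then show "x = y" unfolding ev_def by (cases "x = y") auto
qed

lemma inj_ev: "inj ev"
  unfolding inj_def using ev_par[of _ 1] by simp

lemma good_E: "good d (Eset d)"
proof -
  have "\<forall>x\<in>Eset d. supp d x \<and> rin d x x = 1"
  proof
    fix x assume "x \<in> Eset d"
    then obtain y where y: "y < d" "x = ev y" unfolding Eset_def by auto
    then show "supp d x \<and> rin d x x = 1" using rin_ev[OF y(1) y(1)] by (auto simp: supp_def ev_def)
  qed
  moreover have "\<forall>x\<in>Eset d. \<forall>y\<in>Eset d. \<forall>c. x = (\<lambda>i. c * y i) \<longrightarrow> x = y"
  proof (intro ballI allI impI)
    fix x y c assume x: "x \<in> Eset d" and y: "y \<in> Eset d" and eq: "x = (\<lambda>i. c * y i)"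
    obtain a where a: "x = ev a" using x unfolding Eset_def by auto
    obtain b where b: "y = ev b" using y unfolding Eset_def by auto
    have "a = b" using ev_par[of a c b] eq a b by simp
    then show "x = y" using a b by simp
  qed
  moreover have "finite (Eset d)" unfolding Eset_def by simp
  ultimately show ?thesis unfolding good_def by blast
qed

lemma card_E: "card (Eset d) = d"
  unfolding Eset_def using card_image[OF inj_on_subset[OF inj_ev]] by simp

lemma orthset_E: "orthset d (Eset d)"
  unfolding orthset_def Eset_def using rin_ev by auto

lemma isbasis_E: "isbasis d (Eset d) (Eset d)"
  unfolding isbasis_def using orthset_E card_E by simp

lemma hasbasis_E: "hasbasis d (Eset d)"
  unfolding hasbasis_def using isbasis_E by blast

lemma frame_E: "frame d (Eset d) 1"
  unfolding frame_def
proof (intro allI impI)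
  fix i j assume "i < d" "j < d"
  have "(\<Sum>x\<in>Eset d. x i * x j) = (\<Sum>y<d. ev y i * ev y j)"
    unfolding Eset_def by (subst sum.reindex[OF inj_on_subset[OF inj_ev]]) auto
  also have "\<dots> = (\<Sum>y<d. if y = i then (if i = j then 1 else 0) else 0)"
    unfolding ev_def by (intro sum.cong) auto
  also have "\<dots> = (if i = j then 1 else 0)" using \<open>i < d\<close> by (simp add: sum.delta)
  finally show "(\<Sum>x\<in>Eset d. x i * x j) = (if i = j then 1 else 0)" .
qed

lemma alpha_E: "alpha_le d (Eset d) 1"
  using alpha_cliques[of "{0::nat}" "Eset d" "\<lambda>_. Eset d" d] orthset_E by simp

lemma cover_E: "cover d (Eset d) 1"
  unfolding cover_def
  by (rule exI[of _ "{0}"], rule exI[of _ "\<lambda>_. Eset d"], rule exI[of _ "\<lambda>_. 1"]) (simp add: orthset_E)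

definition pr :: "nat \<Rightarrow> real" where "pr t = sqrt (1 + (real t)^2)"
definition pv :: "nat \<Rightarrow> nat \<Rightarrow> nat \<Rightarrow> real" where
  "pv t s = (\<lambda>i. if i = 0 then (if s = 0 then 1 else - real t) / pr t
                 else if i = 1 then (if s = 0 then real t else 1) / pr t else 0)"
definition Pset :: "nat set \<Rightarrow> (nat \<Rightarrow> real) set" where
  "Pset ts = (\<lambda>(t,s). pv t s) ` (ts \<times> {..<2})"

lemma pr_pos: "0 < pr t" unfolding pr_def by (simp add: add_pos_nonneg)
lemma pr_nz: "pr t \<noteq> 0" using pr_pos[of t] by simp
lemma pr_sq: "pr t * pr t = 1 + real t * real t" unfolding pr_def
  by (metis add_nonneg_nonneg power2_eq_square real_sqrt_pow2 zero_le_one zero_le_power2)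
lemma pv_norm: "1 / pr t * (1 / pr t) + real t / pr t * (real t / pr t) = 1"
proof -
  have "1 / pr t * (1 / pr t) + real t / pr t * (real t / pr t) = (1 + real t * real t) / (pr t * pr t)"
    by (simp add: add_divide_distrib)
  also have "\<dots> = 1" using pr_nz[of t] by (simp add: pr_sq[symmetric])
  finally show ?thesis .
qed

lemma pv_vals: "pv t 0 0 = 1 / pr t" "pv t 0 1 = real t / pr t" "pv t 1 0 = - real t / pr t"
  "pv t 1 1 = 1 / pr t" "pv t 0 (Suc 0) = real t / pr t" "pv t (Suc 0) 0 = - real t / pr t"
  "pv t (Suc 0) (Suc 0) = 1 / pr t"
  by (simp_all add: pv_def)

lemma pv_prod: "s < 2 \<Longrightarrow> s' < 2 \<Longrightarrow> pv t s 0 * pv t s' 0 + pv t s 1 * pv t s' 1 = (if s = s' then 1 else 0)"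
proof -
  assume "s < 2" "s' < 2"
  then have "s = 0 \<or> s = 1" "s' = 0 \<or> s' = 1" by auto
  moreover have "pv t 0 0 * pv t 0 0 + pv t 0 1 * pv t 0 1 = 1" using pv_norm[of t] by (simp add: pv_vals)
  moreover have "pv t 1 0 * pv t 1 0 + pv t 1 1 * pv t 1 1 = 1" using pv_norm[of t] by (simp add: pv_vals)
  moreover have "pv t 0 0 * pv t 1 0 + pv t 0 1 * pv t 1 1 = 0" by (simp add: pv_vals)
  moreover have "pv t 1 0 * pv t 0 0 + pv t 1 1 * pv t 0 1 = 0" by (simp add: pv_vals)
  ultimately show ?thesis by auto
qed

lemma rin_pv: "s < 2 \<Longrightarrow> s' < 2 \<Longrightarrow> rin 2 (pv t s) (pv t s') = (if s = s' then 1 else 0)"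
proof -
  assume "s < 2" "s' < 2"
  have "rin 2 (pv t s) (pv t s') = pv t s 0 * pv t s' 0 + pv t s 1 * pv t s' 1"
    unfolding rin_def by (simp add: numeral_2_eq_2)
  then show ?thesis using pv_prod[OF \<open>s < 2\<close> \<open>s' < 2\<close>] by simp
qed

lemma pv_par:
  assumes s: "s < 2" "s' < 2" and eq: "pv t s = (\<lambda>i. c * pv t' s' i)"
  shows "t = t' \<and> s = s'"
proof -
  have e0: "pv t s 0 = c * pv t' s' 0" and e1: "pv t s 1 = c * pv t' s' 1" using eq by metis+
  have cr: "pv t s 0 * pv t' s' 1 = pv t s 1 * pv t' s' 0" using e0 e1 by simp
  have p: "pr t \<noteq> 0" "pr t' \<noteq> 0" using pr_nz by auto
  have nn: "0 \<le> real t * real t'" by simp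
  have ss: "s = 0 \<or> s = 1" "s' = 0 \<or> s' = 1" using s by auto
  have c00: "pv t 0 0 * pv t' 0 1 = pv t 0 1 * pv t' 0 0 \<Longrightarrow> t = t'"
    using p by (simp add: pv_vals field_simps)
  have c11: "pv t 1 0 * pv t' 1 1 = pv t 1 1 * pv t' 1 0 \<Longrightarrow> t = t'"
    using p by (simp add: pv_vals field_simps)
  have c01: "pv t 0 0 * pv t' 1 1 \<noteq> pv t 0 1 * pv t' 1 0"
  proof
    assume "pv t 0 0 * pv t' 1 1 = pv t 0 1 * pv t' 1 0"
    then have "1 = - (real t * real t')" using p by (simp add: pv_vals field_simps)
    with nn show False by linarith
  qed
  have c10: "pv t 1 0 * pv t' 0 1 \<noteq> pv t 1 1 * pv t' 0 0"
  proof
    assume "pv t 1 0 * pv t' 0 1 = pv t 1 1 * pv t' 0 0"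
    then have "- (real t * real t') = 1" using p by (simp add: pv_vals field_simps)
    with nn show False by linarith
  qed
  show ?thesis using ss cr c00 c11 c01 c10 by auto
qed

lemma inj_pv: "inj_on (\<lambda>(t,s). pv t s) (ts \<times> {..<2})"
  unfolding inj_on_def using pv_par[of _ _ _ 1] by auto

lemma finite_P: "finite ts \<Longrightarrow> finite (Pset ts)"
  unfolding Pset_def by simp

lemma good_P: assumes fin: "finite ts" shows "good 2 (Pset ts)"
proof -
  have "\<forall>x\<in>Pset ts. supp 2 x \<and> rin 2 x x = 1"
  proof
    fix x assume "x \<in> Pset ts"
    then obtain t s where ts: "s < 2" "x = pv t s" unfolding Pset_def by auto
    then show "supp 2 x \<and> rin 2 x x = 1" using rin_pv[OF ts(1) ts(1)] by (auto simp: supp_def pv_def)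
  qed
  moreover have "\<forall>x\<in>Pset ts. \<forall>y\<in>Pset ts. \<forall>c. x = (\<lambda>i. c * y i) \<longrightarrow> x = y"
  proof (intro ballI allI impI)
    fix x y c assume x: "x \<in> Pset ts" and y: "y \<in> Pset ts" and eq: "x = (\<lambda>i. c * y i)"
    obtain t s where ts: "s < 2" "x = pv t s" using x unfolding Pset_def by auto
    obtain t' s' where ts': "s' < 2" "y = pv t' s'" using y unfolding Pset_def by auto
    have "t = t' \<and> s = s'" using pv_par[OF ts(1) ts'(1), of t c t'] eq ts ts' by simp
    then show "x = y" using ts ts' by simp
  qed
  ultimately show ?thesis using finite_P[OF fin] unfolding good_def by blast
qed

lemma frame_P:
  assumes fin: "finite ts"
  shows "frame 2 (Pset ts) (real (card ts))"
  unfolding frame_def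
proof (intro allI impI)
  fix i j :: nat assume ij: "i < 2" "j < 2"
  have "(\<Sum>x\<in>Pset ts. x i * x j) = (\<Sum>(t,s)\<in>ts \<times> {..<2}. pv t s i * pv t s j)"
    unfolding Pset_def by (subst sum.reindex[OF inj_pv]) (simp add: split_beta)
  also have "\<dots> = (\<Sum>t\<in>ts. \<Sum>s<2. pv t s i * pv t s j)"
    by (simp add: sum.cartesian_product)
  also have "\<dots> = (\<Sum>t\<in>ts. if i = j then 1 else 0)"
  proof (rule sum.cong[OF refl])
    fix t
    have "(\<Sum>s<2. pv t s i * pv t s j) = pv t 0 i * pv t 0 j + pv t 1 i * pv t 1 j"
      by (simp add: numeral_2_eq_2)
    also have "\<dots> = (if i = j then 1 else 0)"
    proof -
      have ii: "i = 0 \<or> i = 1" "j = 0 \<or> j = 1" using ij by auto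
      have "pv t 0 0 * pv t 0 0 + pv t 1 0 * pv t 1 0 = 1" using pv_norm[of t] by (simp add: pv_vals)
      moreover have "pv t 0 1 * pv t 0 1 + pv t 1 1 * pv t 1 1 = 1" using pv_norm[of t] by (simp add: pv_vals)
      moreover have "pv t 0 0 * pv t 0 1 + pv t 1 0 * pv t 1 1 = 0" by (simp add: pv_vals)
      moreover have "pv t 0 1 * pv t 0 0 + pv t 1 1 * pv t 1 0 = 0" by (simp add: pv_vals)
      ultimately show ?thesis using ii by auto
    qed
    finally show "(\<Sum>s<2. pv t s i * pv t s j) = (if i = j then 1 else 0)" .
  qed
  also have "\<dots> = (if i = j then real (card ts) else 0)" by simp
  finally show "(\<Sum>x\<in>Pset ts. x i * x j) = (if i = j then real (card ts) else 0)" .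
qed

lemma orth_pair: "orthset 2 {pv t 0, pv t 1}"
  unfolding orthset_def using rin_pv[of 0 1 t] rin_pv[of 1 0 t] by auto

lemma orth_pair': "orthset 2 {pv t 0, pv t (Suc 0)}"
  using orth_pair by simp

lemma Pset_mem: "x \<in> Pset ts \<longleftrightarrow> (\<exists>t\<in>ts. x = pv t 0 \<or> x = pv t 1)"
  unfolding Pset_def by (auto simp: less_Suc_eq numeral_2_eq_2)

lemma alpha_P: "finite ts \<Longrightarrow> alpha_le 2 (Pset ts) (card ts)"
  by (rule alpha_cliques[where cl = "\<lambda>t. {pv t 0, pv t 1}"]) (auto simp: Pset_mem orth_pair')

lemma pv_eq: "s < 2 \<Longrightarrow> s' < 2 \<Longrightarrow> pv t s = pv t' s' \<longleftrightarrow> t = t' \<and> s = s'"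
  using pv_par[of s s' t 1 t'] by auto

lemma cover_P:
  assumes fin: "finite ts"
  shows "cover 2 (Pset ts) (real (card ts))"
  unfolding cover_def
proof (rule exI[of _ ts], rule exI[of _ "\<lambda>t. {pv t 0, pv t 1}"], rule exI[of _ "\<lambda>_. 1"], intro conjI)
  show "\<forall>x\<in>Pset ts. (\<Sum>k\<in>{k \<in> ts. x \<in> {pv k 0, pv k 1}}. 1::real) = 1"
  proof
    fix x assume "x \<in> Pset ts"
    then obtain t s where ts: "t \<in> ts" "s < 2" "x = pv t s" unfolding Pset_def by auto
    have "{k \<in> ts. x \<in> {pv k 0, pv k 1}} = {t}"
      using ts pv_eq[of s 0 t] pv_eq[of s 1 t] by auto
    then show "(\<Sum>k\<in>{k \<in> ts. x \<in> {pv k 0, pv k 1}}. 1::real) = 1" by simp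
  qed
qed (auto simp: fin orth_pair orth_pair' Pset_mem)

lemma hasbasis_P: "t \<in> ts \<Longrightarrow> hasbasis 2 (Pset ts)"
  unfolding hasbasis_def isbasis_def
  by (rule exI[of _ "{pv t 0, pv t 1}"]) (auto simp: orth_pair orth_pair' Pset_mem pv_eq)

lemma Pset_Un: "Pset (A \<union> B) = Pset A \<union> Pset B"
  unfolding Pset_def by auto

definition ivl :: "int list list" where
  "ivl = [[0,0,0,1],[0,0,1,0],[1,1,0,0],[1,-1,0,0],[0,1,0,0],[1,0,1,0],[1,0,-1,0],[1,-1,1,-1],
          [1,-1,-1,1],[0,0,1,1],[1,1,1,1],[0,1,0,-1],[1,0,0,1],[1,0,0,-1],[0,1,-1,0],[1,1,-1,1],
          [1,1,1,-1],[-1,1,1,1]]"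
definition bl :: "nat list list" where
  "bl = [[0, 1, 2, 3], [0, 4, 5, 6], [7, 8, 2, 9], [7, 10, 6, 11], [1, 4, 12, 13], [8, 10, 13, 14],
         [15, 16, 3, 9], [15, 17, 5, 11], [16, 17, 12, 14]]"
definition iv :: "nat \<Rightarrow> nat \<Rightarrow> real" where
  "iv k i = (if i < 4 then of_int (ivl ! k ! i) else 0)"
definition nsq :: "nat \<Rightarrow> real" where "nsq k = (\<Sum>i<4. (iv k i)^2)"
definition cab :: "nat \<Rightarrow> nat \<Rightarrow> real" where "cab k = (\<lambda>i. iv k i / sqrt (nsq k))"
definition bidx :: "nat \<Rightarrow> nat set" where "bidx b = set (bl ! b)"
definition Tset :: "(nat \<Rightarrow> real) set" where "Tset = cab ` {..<18}"

lemma lt18: "(k::nat) < 18 \<longleftrightarrow> k = 0 \<or> k = 1 \<or> k = 2 \<or> k = 3 \<or> k = 4 \<or> k = 5 \<or> k = 6 \<or> k = 7 \<or> k = 8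
   \<or> k = 9 \<or> k = 10 \<or> k = 11 \<or> k = 12 \<or> k = 13 \<or> k = 14 \<or> k = 15 \<or> k = 16 \<or> k = 17"
  by presburger

lemma lt9: "(k::nat) < 9 \<longleftrightarrow> k = 0 \<or> k = 1 \<or> k = 2 \<or> k = 3 \<or> k = 4 \<or> k = 5 \<or> k = 6 \<or> k = 7 \<or> k = 8"
  by presburger

lemma lt4: "(k::nat) < 4 \<longleftrightarrow> k = 0 \<or> k = 1 \<or> k = 2 \<or> k = 3"
  by auto

lemma sum4: "(\<Sum>i<(4::nat). f i) = f 0 + f 1 + f 2 + (f 3 :: real)"
  by (simp add: eval_nat_numeral)

lemma nsq_vals: "k < 18 \<Longrightarrow> nsq k = (if k = 0 \<or> k = 1 \<or> k = 4 then 1 else if k = 7 \<or> k = 8 \<or> k = 10 \<or> k = 15 \<or> k = 16 \<or> k = 17 then 4 else 2)"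
  unfolding lt18 nsq_def sum4 by (elim disjE) (simp_all add: iv_def ivl_def)

lemma sum9: "(\<Sum>i<(9::nat). f i) = f 0 + f 1 + f 2 + f 3 + f 4 + f 5 + f 6 + f 7 + (f 8 :: 'a::comm_monoid_add)"
  by (simp add: eval_nat_numeral)
lemma sum18: "(\<Sum>i<(18::nat). f i) = f 0 + f 1 + f 2 + f 3 + f 4 + f 5 + f 6 + f 7 + f 8 + f 9 + f 10
   + f 11 + f 12 + f 13 + f 14 + f 15 + f 16 + (f 17 :: 'a::comm_monoid_add)"
  by (simp add: eval_nat_numeral)

lemma nsq_pos: "k < 18 \<Longrightarrow> 0 < nsq k"
  using nsq_vals by simp

lemma cab_supp: "supp 4 (cab k)"
  unfolding supp_def cab_def iv_def by simp

lemma rin_cab: "rin 4 (cab k) (cab k') = (\<Sum>i<4. iv k i * iv k' i) / (sqrt (nsq k) * sqrt (nsq k'))"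
  unfolding rin_def cab_def by (simp add: sum_divide_distrib)

lemma unit_cab: "k < 18 \<Longrightarrow> rin 4 (cab k) (cab k) = 1"
proof -
  assume k: "k < 18"
  have "(\<Sum>i<4. iv k i * iv k i) = nsq k" unfolding nsq_def by (simp add: power2_eq_square)
  moreover have "sqrt (nsq k) * sqrt (nsq k) = nsq k" using nsq_pos[OF k] by simp
  ultimately show ?thesis using nsq_pos[OF k] by (simp add: rin_cab)
qed

lemma par_int: "k < 18 \<Longrightarrow> k' < 18 \<Longrightarrow> iv k 0 = c * iv k' 0 \<Longrightarrow> iv k 1 = c * iv k' 1 \<Longrightarrow>
   iv k 2 = c * iv k' 2 \<Longrightarrow> iv k 3 = c * iv k' 3 \<Longrightarrow> k = k'"
  unfolding lt18 by (elim disjE; simp add: iv_def ivl_def; linarith?)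

lemma cab_par:
  assumes k: "k < 18" "k' < 18" and eq: "cab k = (\<lambda>i. c * cab k' i)"
  shows "k = k'"
proof -
  define s where "s = sqrt (nsq k)"
  define s' where "s' = sqrt (nsq k')"
  have sp: "s \<noteq> 0" "s' \<noteq> 0" using nsq_pos[OF k(1)] nsq_pos[OF k(2)] unfolding s_def s'_def by auto
  have "iv k i = (c * s / s') * iv k' i" for i
  proof -
    have "cab k i = c * cab k' i" using eq by metis
    then have "iv k i / s = c * (iv k' i / s')" unfolding cab_def s_def s'_def by simp
    then show ?thesis using sp by (simp add: field_simps)
  qed
  then show ?thesis using par_int[OF k] by blast
qed

lemma inj_cab: "inj_on cab {..<18}"
  unfolding inj_on_def using cab_par[of _ _ 1] by simp

lemma bidx_sub: "b < 9 \<Longrightarrow> bidx b \<subseteq> {..<18}"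
  unfolding lt9 bidx_def bl_def by (elim disjE) auto

lemma card_bidx: "b < 9 \<Longrightarrow> card (bidx b) = 4"
  unfolding lt9 bidx_def bl_def by (elim disjE) auto

lemma bidx_orth: "b < 9 \<Longrightarrow> k \<in> bidx b \<Longrightarrow> k' \<in> bidx b \<Longrightarrow> k \<noteq> k' \<Longrightarrow> (\<Sum>i<4. iv k i * iv k' i) = 0"
  unfolding lt9 bidx_def bl_def sum4 by (elim disjE) (auto simp: iv_def ivl_def)

definition Tbase :: "nat \<Rightarrow> (nat \<Rightarrow> real) set" where "Tbase b = cab ` bidx b"

lemma good_T: "good 4 Tset"
proof -
  have "finite Tset" unfolding Tset_def by simp
  moreover have "\<forall>x\<in>Tset. supp 4 x \<and> rin 4 x x = 1"
    unfolding Tset_def using cab_supp unit_cab by auto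
  moreover have "\<forall>x\<in>Tset. \<forall>y\<in>Tset. \<forall>c. x = (\<lambda>i. c * y i) \<longrightarrow> x = y"
  proof (intro ballI allI impI)
    fix x y c assume x: "x \<in> Tset" and y: "y \<in> Tset" and eq: "x = (\<lambda>i. c * y i)"
    obtain k where k: "k < 18" "x = cab k" using x unfolding Tset_def by auto
    obtain k' where k': "k' < 18" "y = cab k'" using y unfolding Tset_def by auto
    have "k = k'" using cab_par[OF k(1) k'(1), of c] eq k k' by simp
    then show "x = y" using k k' by simp
  qed
  ultimately show ?thesis unfolding good_def by blast
qed

lemma isbasis_T: "b < 9 \<Longrightarrow> isbasis 4 Tset (Tbase b)"
proof -
  assume b: "b < 9"
  have sub: "Tbase b \<subseteq> Tset" unfolding Tbase_def Tset_def using bidx_sub[OF b] by auto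
  have "card (Tbase b) = 4" unfolding Tbase_def
    using card_image[OF inj_on_subset[OF inj_cab bidx_sub[OF b]]] card_bidx[OF b] by simp
  moreover have "orthset 4 (Tbase b)"
    unfolding orthset_def Tbase_def
  proof (intro ballI impI)
    fix x y assume "x \<in> cab ` bidx b" "y \<in> cab ` bidx b" "x \<noteq> y"
    then obtain k k' where "k \<in> bidx b" "k' \<in> bidx b" "x = cab k" "y = cab k'" "k \<noteq> k'" by auto
    then show "rin 4 x y = 0" using bidx_orth[OF b] rin_cab by simp
  qed
  ultimately show ?thesis unfolding isbasis_def using sub by simp
qed

lemma hasbasis_T: "hasbasis 4 Tset"
  unfolding hasbasis_def using isbasis_T[of 0] by auto

lemma dc: "(\<Sum>b<9. \<Sum>k\<in>bidx b. h k) = (\<Sum>k<18. h k) + (\<Sum>k<18. (h k :: 'a :: comm_monoid_add))"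
  unfolding sum9 sum18 bidx_def bl_def by (simp add: add_ac)

lemma sum_Tbase: "b < 9 \<Longrightarrow> sum g (Tbase b) = (\<Sum>k\<in>bidx b. g (cab k))"
  unfolding Tbase_def by (rule sum.reindex_cong[OF inj_on_subset[OF inj_cab bidx_sub]]) auto

lemma KS_T: "KSp 4 Tset"
  unfolding KSp_def
proof
  assume "\<exists>g :: (nat \<Rightarrow> real) \<Rightarrow> nat. \<forall>C. isbasis 4 Tset C \<longrightarrow> sum g C = 1"
  then obtain g :: "(nat \<Rightarrow> real) \<Rightarrow> nat" where g: "\<And>C. isbasis 4 Tset C \<Longrightarrow> sum g C = 1" by blast
  have "\<And>b. b < 9 \<Longrightarrow> (\<Sum>k\<in>bidx b. g (cab k)) = 1"
    using g isbasis_T sum_Tbase by metis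
  then have "(\<Sum>b<9. \<Sum>k\<in>bidx b. g (cab k)) = 9" by simp
  then have "(\<Sum>k<18. g (cab k)) + (\<Sum>k<18. g (cab k)) = 9" using dc[of "\<lambda>k. g (cab k)"] by simp
  then show False by presburger
qed

lemma card_filter_sum: "finite A \<Longrightarrow> card {k\<in>A. P k} = (\<Sum>k\<in>A. if P k then 1 else (0::nat))"
  by (simp add: sum.If_cases Int_def)

lemma alpha_T: "alpha_le 4 Tset 4"
  unfolding alpha_le_def
proof (intro allI impI)
  fix I assume I: "I \<subseteq> Tset \<and> indep 4 I"
  define J where "J = {k \<in> {..<18}. cab k \<in> I}"
  have IJ: "I = cab ` J" using I unfolding J_def Tset_def by auto
  have cI: "card I = card J" unfolding IJ
    by (rule card_image[OF inj_on_subset[OF inj_cab]]) (auto simp: J_def)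
  have cJ: "card J = (\<Sum>k<18. if k \<in> J then 1 else 0)"
    using card_filter_sum[of "{..<18}" "\<lambda>k. k \<in> J"] unfolding J_def by simp
  have le1: "(\<Sum>k\<in>bidx b. if k \<in> J then 1 else (0::nat)) \<le> 1" if b: "b < 9" for b
  proof -
    have fin: "finite (bidx b)" unfolding bidx_def by simp
    have eq: "(\<Sum>k\<in>bidx b. if k \<in> J then 1 else (0::nat)) = card {k \<in> bidx b. k \<in> J}"
      using card_filter_sum[OF fin, of "\<lambda>k. k \<in> J"] by simp
    have "k = k'" if "k \<in> {k \<in> bidx b. k \<in> J}" "k' \<in> {k \<in> bidx b. k \<in> J}" for k k'
    proof (rule ccontr)
      assume ne: "k \<noteq> k'"
      have kk: "k < 18" "k' < 18" "cab k \<in> I" "cab k' \<in> I" using that unfolding J_def by auto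
      have "cab k \<noteq> cab k'" using inj_cab kk ne unfolding inj_on_def by auto
      then have "rin 4 (cab k) (cab k') \<noteq> 0" using I kk unfolding indep_def by auto
      moreover have "rin 4 (cab k) (cab k') = 0" using bidx_orth[OF b, of k k'] that ne rin_cab by simp
      ultimately show False by simp
    qed
    then have "card {k \<in> bidx b. k \<in> J} \<le> 1" using card_le_Suc0_iff_eq[of "{k \<in> bidx b. k \<in> J}"] fin by auto
    then show ?thesis using eq by simp
  qed
  have "(\<Sum>b<9. \<Sum>k\<in>bidx b. if k \<in> J then 1 else (0::nat)) \<le> (\<Sum>b<(9::nat). (1::nat))"
    by (rule sum_mono) (use le1 in simp)
  then have "card J + card J \<le> 9" using dc[of "\<lambda>k. if k \<in> J then 1 else (0::nat)"] cJ by simp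
  then show "card I \<le> 4" using cI by simp
qed

lemma cover_count: "k < 18 \<Longrightarrow> (\<Sum>b<9. if k \<in> bidx b then 1/2 else (0::real)) = 1"
  unfolding lt18 sum9 bidx_def bl_def by (elim disjE) simp_all

lemma cover_T: "cover 4 Tset (9/2)"
  unfolding cover_def
proof (rule exI[of _ "{..<9}"], rule exI[of _ Tbase], rule exI[of _ "\<lambda>_. 1/2"], intro conjI)
  show "\<forall>k\<in>{..<9}. Tbase k \<subseteq> Tset \<and> orthset 4 (Tbase k) \<and> 0 \<le> (1/2::real)"
    using isbasis_T unfolding isbasis_def by auto
  show "\<forall>x\<in>Tset. (\<Sum>k\<in>{k \<in> {..<9}. x \<in> Tbase k}. 1/2) = (1::real)"
  proof
    fix x assume "x \<in> Tset"
    then obtain k where k: "k < 18" "x = cab k" unfolding Tset_def by auto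
    have mem: "cab k \<in> Tbase b \<longleftrightarrow> k \<in> bidx b" if "b < 9" for b
    proof
      assume "cab k \<in> Tbase b"
      then obtain k' where "k' \<in> bidx b" "cab k = cab k'" unfolding Tbase_def by auto
      moreover then have "k' < 18" using bidx_sub[OF that] by auto
      ultimately show "k \<in> bidx b" using inj_cab k(1) unfolding inj_on_def by auto
    qed (auto simp: Tbase_def)
    have seteq: "{b \<in> {..<9}. x \<in> Tbase b} = {b \<in> {..<9}. k \<in> bidx b}" using mem k by auto
    have "(\<Sum>b\<in>{b \<in> {..<9}. x \<in> Tbase b}. 1/2) = (\<Sum>b<9. if k \<in> bidx b then 1/2 else (0::real))"
      unfolding seteq by (rule sum.inter_filter) simp
    then show "(\<Sum>b\<in>{b \<in> {..<9}. x \<in> Tbase b}. 1/2) = (1::real)" using cover_count[OF k(1)] by simp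
  qed
qed simp_all

lemma frame_T: "frame 4 Tset (9/2)"
  unfolding frame_def
proof (intro allI impI)
  fix i j :: nat assume ij: "i < 4" "j < 4"
  have "(\<Sum>x\<in>Tset. x i * x j) = (\<Sum>k<18. cab k i * cab k j)"
    unfolding Tset_def by (rule sum.reindex_cong[OF inj_cab]) auto
  also have "\<dots> = (\<Sum>k<18. iv k i * iv k j / nsq k)"
  proof (rule sum.cong[OF refl])
    fix k :: nat assume "k \<in> {..<18}"
    then have "0 < nsq k" using nsq_pos by simp
    then have "sqrt (nsq k) * sqrt (nsq k) = nsq k" by simp
    then show "cab k i * cab k j = iv k i * iv k j / nsq k" unfolding cab_def by (simp add: field_simps)
  qed
  also have "\<dots> = (if i = j then 9/2 else 0)"
    using ij unfolding lt4 sum18 by (elim disjE) (simp_all add: iv_def ivl_def nsq_vals)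
  finally show "(\<Sum>x\<in>Tset. x i * x j) = (if i = j then 9/2 else 0)" .
qed

lemma sos_identity:
  fixes w :: "(nat \<Rightarrow> real) \<Rightarrow> real"
  assumes fin: "finite A"
  shows "(\<Sum>x\<in>A. \<Sum>y\<in>A. w x * (rin n x y)^2 * w y) = (\<Sum>i<n. \<Sum>j<n. (\<Sum>x\<in>A. w x * x i * x j)^2)"
proof -
  have sq: "(rin n x y)^2 = (\<Sum>i<n. \<Sum>j<n. (x i * x j) * (y i * y j))" for x y :: "nat \<Rightarrow> real"
    unfolding rin_def power2_eq_square sum_product by (simp add: algebra_simps)
  have "(\<Sum>x\<in>A. \<Sum>y\<in>A. w x * (rin n x y)^2 * w y)
      = (\<Sum>x\<in>A. \<Sum>y\<in>A. \<Sum>i<n. \<Sum>j<n. (w x * x i * x j) * (w y * y i * y j))"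
    unfolding sq by (simp add: sum_distrib_left sum_distrib_right algebra_simps)
  also have "\<dots> = (\<Sum>x\<in>A. \<Sum>i<n. \<Sum>j<n. \<Sum>y\<in>A. (w x * x i * x j) * (w y * y i * y j))"
    by (simp add: sum.swap[of _ A "{..<n}"] sum.swap[of _ A "{..<n}"])
  also have "\<dots> = (\<Sum>i<n. \<Sum>j<n. \<Sum>x\<in>A. \<Sum>y\<in>A. (w x * x i * x j) * (w y * y i * y j))"
    by (simp add: sum.swap[of _ A "{..<n}"])
  also have "\<dots> = (\<Sum>i<n. \<Sum>j<n. (\<Sum>x\<in>A. w x * x i * x j)^2)"
    by (simp add: power2_eq_square sum_product)
  finally show ?thesis .
qed

lemma theta_upper:
  fixes V :: "'v set" and X :: "'v \<Rightarrow> 'v \<Rightarrow> real" and cl :: "nat \<Rightarrow> 'v set"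
  assumes finV: "finite V" and finK: "finite K"
    and clV: "\<And>k. k \<in> K \<Longrightarrow> cl k \<subseteq> V"
    and cl0: "\<And>k u v. k \<in> K \<Longrightarrow> u \<in> cl k \<Longrightarrow> v \<in> cl k \<Longrightarrow> u \<noteq> v \<Longrightarrow> X u v = 0"
    and covr: "\<And>u. u \<in> V \<Longrightarrow> (\<Sum>k\<in>{k\<in>K. u \<in> cl k}. wt k) = 1"
    and wt_nonneg: "\<And>k. k \<in> K \<Longrightarrow> 0 \<le> wt k"
    and wsum: "(\<Sum>k\<in>K. wt k) = W" and Wpos: "0 < W"
    and psd: "\<And>z. (\<Sum>i\<in>V. \<Sum>j\<in>V. z i * X i j * z j) \<ge> 0"
    and tr: "(\<Sum>i\<in>V. X i i) = 1"
  shows "(\<Sum>i\<in>V. \<Sum>j\<in>V. X i j) \<le> W"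
proof -
  define s where "s = (\<Sum>i\<in>V. \<Sum>j\<in>V. X i j)"
  define ind where "ind k i = (if i \<in> cl k then 1 else (0::real))" for k i
  have cov1: "(\<Sum>k\<in>K. wt k * ind k i) = 1" if "i \<in> V" for i
  proof -
    have "(\<Sum>k\<in>K. wt k * ind k i) = (\<Sum>k\<in>{k\<in>K. i \<in> cl k}. wt k)"
      unfolding ind_def by (simp add: sum.inter_filter[OF finK] if_distrib cong: if_cong)
    then show ?thesis using covr[OF that] by simp
  qed
  have diag: "ind k i * ind k j * X i j = (if i = j then ind k i * X i i else 0)" if "k \<in> K" for k i j
    unfolding ind_def using cl0[OF that] by auto
  define Q where "Q k = (\<Sum>i\<in>V. \<Sum>j\<in>V. (W * ind k i - 1) * X i j * (W * ind k j - 1))" for k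
  have Qexp: "Q k = W^2 * (\<Sum>i\<in>V. ind k i * X i i) - W * (\<Sum>i\<in>V. \<Sum>j\<in>V. ind k i * X i j)
       - W * (\<Sum>i\<in>V. \<Sum>j\<in>V. X i j * ind k j) + s" if k: "k \<in> K" for k
  proof -
    have "Q k = (\<Sum>i\<in>V. \<Sum>j\<in>V. W^2 * (ind k i * ind k j * X i j) - W * (ind k i * X i j) - W * (X i j * ind k j) + X i j)"
      unfolding Q_def by (intro sum.cong refl) (simp add: algebra_simps power2_eq_square)
    also have "\<dots> = W^2 * (\<Sum>i\<in>V. \<Sum>j\<in>V. ind k i * ind k j * X i j) - W * (\<Sum>i\<in>V. \<Sum>j\<in>V. ind k i * X i j)
       - W * (\<Sum>i\<in>V. \<Sum>j\<in>V. X i j * ind k j) + s"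
      unfolding s_def by (simp add: sum.distrib sum_subtractf sum_distrib_left)
    also have "(\<Sum>i\<in>V. \<Sum>j\<in>V. ind k i * ind k j * X i j) = (\<Sum>i\<in>V. ind k i * X i i)"
      using diag[OF k] finV by (simp add: sum.delta)
    finally show ?thesis .
  qed
  have "0 \<le> (\<Sum>k\<in>K. wt k * Q k)"
  proof (rule sum_nonneg)
    fix k assume "k \<in> K"
    have "0 \<le> Q k" unfolding Q_def using psd[of "\<lambda>i. W * ind k i - 1"] by simp
    moreover have "0 \<le> wt k" using wt_nonneg \<open>k \<in> K\<close> by simp
    ultimately show "0 \<le> wt k * Q k" by simp
  qed
  have P1: "(\<Sum>k\<in>K. wt k * (\<Sum>i\<in>V. ind k i * X i i)) = 1"
  proof -
    have "(\<Sum>k\<in>K. wt k * (\<Sum>i\<in>V. ind k i * X i i)) = (\<Sum>k\<in>K. \<Sum>i\<in>V. wt k * ind k i * X i i)"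
      by (simp add: sum_distrib_left mult.assoc)
    also have "\<dots> = (\<Sum>i\<in>V. \<Sum>k\<in>K. wt k * ind k i * X i i)" by (rule sum.swap)
    also have "\<dots> = (\<Sum>i\<in>V. (\<Sum>k\<in>K. wt k * ind k i) * X i i)" by (simp add: sum_distrib_right)
    also have "\<dots> = (\<Sum>i\<in>V. X i i)" using cov1 by simp
    finally show ?thesis using tr by simp
  qed
  have P2: "(\<Sum>k\<in>K. wt k * (\<Sum>i\<in>V. \<Sum>j\<in>V. ind k i * X i j)) = s"
  proof -
    have "(\<Sum>k\<in>K. wt k * (\<Sum>i\<in>V. \<Sum>j\<in>V. ind k i * X i j)) = (\<Sum>k\<in>K. \<Sum>i\<in>V. wt k * ind k i * (\<Sum>j\<in>V. X i j))"
      by (simp add: sum_distrib_left mult.assoc)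
    also have "\<dots> = (\<Sum>i\<in>V. \<Sum>k\<in>K. wt k * ind k i * (\<Sum>j\<in>V. X i j))" by (rule sum.swap)
    also have "\<dots> = (\<Sum>i\<in>V. (\<Sum>k\<in>K. wt k * ind k i) * (\<Sum>j\<in>V. X i j))" by (simp add: sum_distrib_right)
    also have "\<dots> = s" unfolding s_def using cov1 by simp
    finally show ?thesis .
  qed
  have P3: "(\<Sum>k\<in>K. wt k * (\<Sum>i\<in>V. \<Sum>j\<in>V. X i j * ind k j)) = s"
  proof -
    have "(\<Sum>i\<in>V. \<Sum>j\<in>V. X i j * ind k j) = (\<Sum>j\<in>V. ind k j * (\<Sum>i\<in>V. X i j))" for k
      by (subst sum.swap) (simp add: sum_distrib_left mult.commute)
    then have "(\<Sum>k\<in>K. wt k * (\<Sum>i\<in>V. \<Sum>j\<in>V. X i j * ind k j)) = (\<Sum>k\<in>K. \<Sum>j\<in>V. wt k * ind k j * (\<Sum>i\<in>V. X i j))"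
      by (simp add: sum_distrib_left mult.assoc)
    also have "\<dots> = (\<Sum>j\<in>V. \<Sum>k\<in>K. wt k * ind k j * (\<Sum>i\<in>V. X i j))" by (rule sum.swap)
    also have "\<dots> = (\<Sum>j\<in>V. (\<Sum>k\<in>K. wt k * ind k j) * (\<Sum>i\<in>V. X i j))" by (simp add: sum_distrib_right)
    also have "\<dots> = (\<Sum>j\<in>V. \<Sum>i\<in>V. X i j)" using cov1 by simp
    also have "\<dots> = s" unfolding s_def by (rule sum.swap)
    finally show ?thesis .
  qed
  have "(\<Sum>k\<in>K. wt k * Q k) = (\<Sum>k\<in>K. W^2 * (wt k * (\<Sum>i\<in>V. ind k i * X i i))
      - W * (wt k * (\<Sum>i\<in>V. \<Sum>j\<in>V. ind k i * X i j)) - W * (wt k * (\<Sum>i\<in>V. \<Sum>j\<in>V. X i j * ind k j)) + wt k * s)"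
    by (intro sum.cong refl) (simp add: Qexp algebra_simps)
  also have "\<dots> = W^2 * (\<Sum>k\<in>K. wt k * (\<Sum>i\<in>V. ind k i * X i i))
      - W * (\<Sum>k\<in>K. wt k * (\<Sum>i\<in>V. \<Sum>j\<in>V. ind k i * X i j)) - W * (\<Sum>k\<in>K. wt k * (\<Sum>i\<in>V. \<Sum>j\<in>V. X i j * ind k j))
      + (\<Sum>k\<in>K. wt k) * s"
    by (simp add: sum.distrib sum_subtractf sum_distrib_left sum_distrib_right)
  also have "\<dots> = W^2 - W * s" using P1 P2 P3 wsum by simp
  finally have "0 \<le> W^2 - W * s" using \<open>0 \<le> (\<Sum>k\<in>K. wt k * Q k)\<close> by simp
  then have "W * s \<le> W * W" by (simp add: power2_eq_square)
  then have "s \<le> W" using Wpos by simp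
  then show ?thesis unfolding s_def .
qed

fun Tp :: "nat \<Rightarrow> (nat \<Rightarrow> real) set" where
  "Tp 0 = Eset 1"
| "Tp (Suc j) = tset (4^j) Tset (Tp j)"

lemma Tp_props: "good (4^j) (Tp j) \<and> frame (4^j) (Tp j) ((9/2)^j) \<and> alpha_le (4^j) (Tp j) (4^j)
   \<and> cover (4^j) (Tp j) ((9/2)^j) \<and> hasbasis (4^j) (Tp j)"
proof (induction j)
  case 0
  then show ?case using good_E[of 1] frame_E[of 1] alpha_E[of 1] cover_E[of 1] hasbasis_E[of 1] by simp
next
  case (Suc j)
  have b: "0 < (4::nat)^j" by simp
  have e: "(4::nat)^Suc j = 4 * 4^j" by simp
  have g: "good (4^j) (Tp j)" "frame (4^j) (Tp j) ((9/2)^j)" "alpha_le (4^j) (Tp j) (4^j)"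
    "cover (4^j) (Tp j) ((9/2)^j)" "hasbasis (4^j) (Tp j)" using Suc by auto
  show ?case unfolding e Tp.simps
    using good_ten[OF b good_T g(1)] frame_ten[OF b good_T g(1) frame_T g(2)]
      alpha_ten[OF b good_T g(1) alpha_T g(3)] cover_ten[OF b good_T g(1) cover_T g(4)]
      hasbasis_ten[OF b good_T g(1) hasbasis_T g(5)] by simp
qed

lemma KS_Tp: "KSp (4^Suc j) (Tp (Suc j))"
proof -
  have b: "0 < (4::nat)^j" by simp
  have g: "good (4^j) (Tp j)" "hasbasis (4^j) (Tp j)" using Tp_props[of j] by auto
  show ?thesis using KS_ten[OF b good_T g(1) KS_T hasbasis_T g(2)] by simp
qed

lemma Tp8: "good (4^8) (Tp 8) \<and> frame (4^8) (Tp 8) ((9/2)^8) \<and> alpha_le (4^8) (Tp 8) (4^8)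
   \<and> cover (4^8) (Tp 8) ((9/2)^8) \<and> hasbasis (4^8) (Tp 8) \<and> KSp (4^8) (Tp 8)"
proof -
  have e: "Suc 7 = (8::nat)" by simp
  have "KSp (4^8) (Tp 8)" using KS_Tp[of 7, unfolded e] .
  then show ?thesis using Tp_props[of 8] by blast
qed

lemma cross:
  assumes L: "good D L" and L': "good D L'" and f1: "finite ts1" and f2: "finite ts2"
    and dj: "ts1 \<inter> ts2 = {}" and x: "x \<in> tset 2 L (Pset ts1)" and y: "y \<in> tset 2 L' (Pset ts2)"
    and eq: "x = (\<lambda>i. c * y i)"
  shows False
proof -
  obtain l p where lp: "l \<in> L" "p \<in> Pset ts1" "x = ten 2 l p" using x by (rule tsetE)
  obtain l' p' where lp': "l' \<in> L'" "p' \<in> Pset ts2" "y = ten 2 l' p'" using y by (rule tsetE)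
  have g12: "good 2 (Pset (ts1 \<union> ts2))" using good_P f1 f2 by simp
  have pin: "p \<in> Pset (ts1 \<union> ts2)" "p' \<in> Pset (ts1 \<union> ts2)" using lp lp' Pset_Un by auto
  have eq2: "ten 2 l p = (\<lambda>i. c * ten 2 l' p' i)" using eq lp lp' by simp
  have two: "0 < (2::nat)" by simp
  obtain d where "p = (\<lambda>q. d * p' q)"
    using ray_factor2[OF two good_supp[OF g12 pin(1)] good_supp[OF g12 pin(2)] good_unit[OF L lp(1)] eq2]
    by blast
  then have "p = p'" using good_ray[OF g12 pin] by blast
  then have "p \<in> Pset ts1 \<inter> Pset ts2" using lp lp' by simp
  then have p12: "p \<in> Pset ts1" "p \<in> Pset ts2" by auto
  obtain t s where t1: "t \<in> ts1" "s < 2" "p = pv t s" using p12(1) unfolding Pset_def by auto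
  obtain t' s' where t2: "t' \<in> ts2" "s' < 2" "p = pv t' s'" using p12(2) unfolding Pset_def by auto
  have tt: "t \<in> ts1" "s < 2" "t' \<in> ts2" "s' < 2" "pv t s = pv t' s'" using t1 t2 by auto
  then have "t = t'" using pv_eq[OF tt(2) tt(4)] by simp
  then show False using tt dj by blast
qed

lemma real_construction:
  fixes hm a r :: nat
  assumes hm: "0 < hm" and a: "0 < a"
  defines "D \<equiv> 4^8 * hm"
  defines "A \<equiv> tset 2 (tset hm (Tp 8) (Eset hm)) (Pset {..<a}) \<union> tset 2 (Eset D) (Pset {a..<a+r})"
  shows "good (D*2) A \<and> frame (D*2) A ((9/2)^8 * a + r) \<and> cover (D*2) A ((9/2)^8 * a + r)
     \<and> KSp (D*2) A \<and> alpha_le (D*2) A (4^8 * a + r)"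
proof -
  define L where "L = tset hm (Tp 8) (Eset hm)"
  have T8: "good (4^8) (Tp 8)" "frame (4^8) (Tp 8) ((9/2)^8)" "alpha_le (4^8) (Tp 8) (4^8)"
    "cover (4^8) (Tp 8) ((9/2)^8)" "hasbasis (4^8) (Tp 8)" "KSp (4^8) (Tp 8)" using Tp8 by auto
  have gL: "good D L" unfolding L_def D_def by (rule good_ten[OF hm T8(1) good_E])
  have fL: "frame D L ((9/2)^8)" unfolding L_def D_def using frame_ten[OF hm T8(1) good_E T8(2) frame_E] by simp
  have aL: "alpha_le D L (4^8)" unfolding L_def D_def using alpha_ten[OF hm T8(1) good_E T8(3) alpha_E] by simp
  have cL: "cover D L ((9/2)^8)" unfolding L_def D_def using cover_ten[OF hm T8(1) good_E T8(4) cover_E] by simp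
  have hL: "hasbasis D L" unfolding L_def D_def by (rule hasbasis_ten[OF hm T8(1) good_E T8(5) hasbasis_E])
  have kL: "KSp D L" unfolding L_def D_def by (rule KS_ten[OF hm T8(1) good_E T8(6) T8(5) hasbasis_E])
  have two: "0 < (2::nat)" by simp
  have f1: "finite {..<a}" and f2: "finite {a..<a+r}" by auto
  have dj: "{..<a} \<inter> {a..<a+r} = {}" by auto
  have gP1: "good 2 (Pset {..<a})" and gP2: "good 2 (Pset {a..<a+r})" using good_P f1 f2 by auto
  have gE: "good D (Eset D)" by (rule good_E)
  define A1 where "A1 = tset 2 L (Pset {..<a})"
  define A2 where "A2 = tset 2 (Eset D) (Pset {a..<a+r})"
  have AA: "A = A1 \<union> A2" unfolding A_def A1_def A2_def L_def by simp
  have g1: "good (D*2) A1" unfolding A1_def by (rule good_ten[OF two gL gP1])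
  have g2: "good (D*2) A2" unfolding A2_def by (rule good_ten[OF two gE gP2])
  have cr: "x \<noteq> (\<lambda>i. c * y i)" if "x \<in> A1" "y \<in> A2" for x y c
    using cross[OF gL gE f1 f2 dj] that unfolding A1_def A2_def by blast
  have cr': "x \<noteq> (\<lambda>i. c * y i)" if "x \<in> A2" "y \<in> A1" for x y c
    using cross[OF gE gL f2 f1] dj that unfolding A1_def A2_def by blast
  have disj: "A1 \<inter> A2 = {}" using cr[of _ _ 1] by auto
  have gA: "good (D*2) (A1 \<union> A2)" by (rule good_union[OF g1 g2 cr cr'])
  have fr1: "frame (D*2) A1 ((9/2)^8 * a)" unfolding A1_def
    using frame_ten[OF two gL gP1 fL frame_P[OF f1]] by simp
  have fr2: "frame (D*2) A2 r" unfolding A2_def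
    using frame_ten[OF two gE gP2 frame_E frame_P[OF f2]] by simp
  have co1: "cover (D*2) A1 ((9/2)^8 * a)" unfolding A1_def
    using cover_ten[OF two gL gP1 cL cover_P[OF f1]] by simp
  have co2: "cover (D*2) A2 r" unfolding A2_def
    using cover_ten[OF two gE gP2 cover_E cover_P[OF f2]] by simp
  have al1: "alpha_le (D*2) A1 (4^8 * a)" unfolding A1_def
    using alpha_ten[OF two gL gP1 aL alpha_P[OF f1]] by simp
  have al2: "alpha_le (D*2) A2 r" unfolding A2_def
    using alpha_ten[OF two gE gP2 alpha_E alpha_P[OF f2]] by simp
  have hP1: "hasbasis 2 (Pset {..<a})" using hasbasis_P[of 0] a by simp
  have ks1: "KSp (D*2) A1" unfolding A1_def by (rule KS_ten[OF two gL gP1 kL hL hP1])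
  have ks: "KSp (D*2) (A1 \<union> A2)" using KS_mono[OF ks1, of "A1 \<union> A2"] by blast
  show ?thesis unfolding AA
    using gA frame_union[OF g1 g2 disj fr1 fr2] cover_union[OF disj co1 co2]
      ks alpha_union[OF al1 al2] by blast
qed

lemma transport:
  fixes A :: "(nat \<Rightarrow> real) set" and W :: real and al :: nat
  assumes cardn: "CARD('n::finite) = n" and gA: "good n A" and fA: "frame n A W" and cA: "cover n A W"
    and kA: "KSp n A" and aA: "alpha_le n A al" and Wpos: "0 < W"
  shows "\<exists>S :: (complex ^ 'n) set. KS_proof S \<and> distinct_projectors S \<and> real (card S) = W * real n
     \<and> lovasz_theta S orth_edge = W \<and> indep_number S orth_edge \<le> al"
proof -
  obtain idx :: "'n \<Rightarrow> nat" where bij: "bij_betw idx UNIV {0..<n}"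
    using ex_bij_betw_finite_nat[of "UNIV :: 'n set"] cardn by auto
  define emb :: "(nat \<Rightarrow> real) \<Rightarrow> complex ^ 'n" where "emb x = (\<chi> i. complex_of_real (x (idx i)))" for x
  have finA: "finite A" using gA by (simp add: good_def)
  have key: "cinner (emb x) (emb y) = complex_of_real (rin n x y)" for x y
  proof -
    have "cinner (emb x) (emb y) = (\<Sum>i\<in>UNIV. complex_of_real (x (idx i) * y (idx i)))"
      unfolding cinner_def emb_def by simp
    also have "\<dots> = complex_of_real (\<Sum>j\<in>{0..<n}. x j * y j)"
      using sum.reindex_bij_betw[OF bij, of "\<lambda>j. complex_of_real (x j * y j)"] by simp
    finally show ?thesis unfolding rin_def by (simp add: atLeast0LessThan)
  qed
  have emb_eq: "x = y" if "x \<in> A" "y \<in> A" "emb x = emb y" for x y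
  proof -
    have "x (idx i) = y (idx i)" for i
      using that(3) unfolding emb_def by (metis of_real_eq_iff vec_lambda_beta)
    then have "x j = y j" if "j < n" for j
      using bij that unfolding bij_betw_def by (metis atLeastLessThan_iff imageE zero_le)
    moreover have "x j = y j" if "\<not> j < n" for j
      using good_supp[OF gA \<open>x \<in> A\<close>] good_supp[OF gA \<open>y \<in> A\<close>] that unfolding supp_def by simp
    ultimately show "x = y" by (metis ext)
  qed
  have inj: "inj_on emb A" unfolding inj_on_def using emb_eq by blast
  define S where "S = emb ` A"
  have finS: "finite S" unfolding S_def using finA by simp
  have unitS: "\<forall>v\<in>S. unit_vec v" unfolding S_def unit_vec_def using key good_unit[OF gA] by simp
  have cardS: "real (card S) = W * real n"
    unfolding S_def using card_image[OF inj] card_frame[OF gA fA] by simp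
  have Npos: "0 < real (card S)" using cardS Wpos cardn
    by (metis mult_pos_pos of_nat_0_less_iff zero_less_card_finite)
  have dp: "distinct_projectors S"
    unfolding distinct_projectors_def
  proof (intro ballI allI impI)
    fix u v c assume u: "u \<in> S" and v: "v \<in> S" and uv: "u = c *s v"
    obtain x where x: "x \<in> A" "u = emb x" using u unfolding S_def by auto
    obtain y where y: "y \<in> A" "v = emb y" using v unfolding S_def by auto
    have "x (idx i) = Re c * y (idx i)" for i
    proof -
      have "u $ i = c * v $ i" using uv by simp
      then have "complex_of_real (x (idx i)) = c * complex_of_real (y (idx i))" using x y unfolding emb_def by simp
      then have "Re (complex_of_real (x (idx i))) = Re (c * complex_of_real (y (idx i)))" by simp
      then show ?thesis by simp
    qed
    then have "x j = Re c * y j" if "j < n" for j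
      using bij that unfolding bij_betw_def by (metis atLeastLessThan_iff imageE zero_le)
    moreover have "x j = Re c * y j" if "\<not> j < n" for j
      using good_supp[OF gA x(1)] good_supp[OF gA y(1)] that unfolding supp_def by simp
    ultimately have "x = (\<lambda>j. Re c * y j)" by (metis ext)
    then have "x = y" using good_ray[OF gA x(1) y(1)] by blast
    then show "u = v" using x y by simp
  qed
  have ks: "KS_set S"
    unfolding KS_set_def
  proof (intro conjI finS unitS notI)
    assume "\<exists>f. coloring S f"
    then obtain f where f: "coloring S f" by blast
    define g where "g x = f (emb x)" for x
    have "sum g C = 1" if C: "isbasis n A C" for C
    proof -
      have CA: "C \<subseteq> A" using C unfolding isbasis_def by auto
      have injC: "inj_on emb C" using inj_on_subset[OF inj CA] .
      have "emb ` C \<subseteq> S" unfolding S_def using CA by auto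
      moreover have "onb (emb ` C)"
        unfolding onb_def
      proof (intro conjI)
        show "\<forall>v\<in>emb ` C. unit_vec v" using unitS \<open>emb ` C \<subseteq> S\<close> by auto
        show "mutually_orth (emb ` C)"
          unfolding mutually_orth_def corth_def
          using C key unfolding isbasis_def orthset_def by auto
        show "finite (emb ` C)" using finA CA finite_subset by auto
        show "card (emb ` C) = CARD('n)" using card_image[OF injC] C cardn unfolding isbasis_def by simp
      qed
      ultimately have "sum f (emb ` C) = 1" using f unfolding coloring_def by blast
      then show ?thesis using sum.reindex[OF injC, of f] unfolding g_def by (simp add: comp_def)
    qed
    then show False using kA unfolding KSp_def by blast
  qed
  have alS: "indep_number S orth_edge \<le> al"
    unfolding indep_number_def
  proof (rule Max.boundedI)
    show "finite {card I |I. I \<subseteq> S \<and> (\<forall>u\<in>I. \<forall>v\<in>I. \<not> orth_edge u v)}"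
    proof (rule finite_subset[of _ "{..card S}"])
      show "{card I |I. I \<subseteq> S \<and> (\<forall>u\<in>I. \<forall>v\<in>I. \<not> orth_edge u v)} \<subseteq> {..card S}"
        using card_mono[OF finS] by auto
    qed simp
    show "{card I |I. I \<subseteq> S \<and> (\<forall>u\<in>I. \<forall>v\<in>I. \<not> orth_edge u v)} \<noteq> {}" by auto
    fix m assume "m \<in> {card I |I. I \<subseteq> S \<and> (\<forall>u\<in>I. \<forall>v\<in>I. \<not> orth_edge u v)}"
    then obtain I where I: "m = card I" "I \<subseteq> S" "\<forall>u\<in>I. \<forall>v\<in>I. \<not> orth_edge u v" by blast
    define J where "J = {x \<in> A. emb x \<in> I}"
    have IJ: "I = emb ` J" using I(2) unfolding J_def S_def by auto
    have JA: "J \<subseteq> A" unfolding J_def by auto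
    have cIJ: "card I = card J" unfolding IJ using card_image[OF inj_on_subset[OF inj JA]] .
    have "indep n J"
      unfolding indep_def
    proof (intro ballI impI)
      fix x y assume xy: "x \<in> J" "y \<in> J" "x \<noteq> y"
      then have "emb x \<noteq> emb y" using emb_eq JA by blast
      moreover have "emb x \<in> I" "emb y \<in> I" using xy unfolding J_def by auto
      ultimately have "\<not> corth (emb x) (emb y)" using I(3) unfolding orth_edge_def by blast
      then show "rin n x y \<noteq> 0" unfolding corth_def key by simp
    qed
    then have "card J \<le> al" using aA JA unfolding alpha_le_def by blast
    then show "m \<le> al" using I(1) cIJ by simp
  qed
  have th: "lovasz_theta S orth_edge = W"
  proof -
    let ?Xi = "{(\<Sum>i\<in>S. \<Sum>j\<in>S. X i j) | X.
      (\<forall>i\<in>S. \<forall>j\<in>S. X i j = X j i)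
    \<and> (\<forall>z. (\<Sum>i\<in>S. \<Sum>j\<in>S. z i * X i j * z j) \<ge> 0)
    \<and> (\<Sum>i\<in>S. X i i) = 1
    \<and> (\<forall>i\<in>S. \<forall>j\<in>S. orth_edge i j \<longrightarrow> X i j = 0)}"
    obtain K :: "nat set" and cl and wt :: "nat \<Rightarrow> real" where cv: "finite K"
      "\<forall>k\<in>K. cl k \<subseteq> A \<and> orthset n (cl k) \<and> 0 \<le> wt k"
      "\<forall>x\<in>A. (\<Sum>k\<in>{k\<in>K. x \<in> cl k}. wt k) = 1" "(\<Sum>k\<in>K. wt k) = W"
      using cA unfolding cover_def by blast
    have upper: "\<xi> \<le> W" if "\<xi> \<in> ?Xi" for \<xi>
    proof -
      obtain X where X: "\<xi> = (\<Sum>i\<in>S. \<Sum>j\<in>S. X i j)"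
        "\<forall>z. (\<Sum>i\<in>S. \<Sum>j\<in>S. z i * X i j * z j) \<ge> 0" "(\<Sum>i\<in>S. X i i) = 1"
        "\<forall>i\<in>S. \<forall>j\<in>S. orth_edge i j \<longrightarrow> X i j = 0"
        using \<open>\<xi> \<in> ?Xi\<close> by blast
      have "(\<Sum>i\<in>S. \<Sum>j\<in>S. X i j) \<le> W"
      proof (rule theta_upper[where K = K and cl = "\<lambda>k. emb ` cl k" and wt = wt])
        show "finite S" by (rule finS)
        show "finite K" by (rule cv(1))
        show "\<And>k. k \<in> K \<Longrightarrow> emb ` cl k \<subseteq> S" using cv(2) unfolding S_def by auto
        show "\<And>k u v. k \<in> K \<Longrightarrow> u \<in> emb ` cl k \<Longrightarrow> v \<in> emb ` cl k \<Longrightarrow> u \<noteq> v \<Longrightarrow> X u v = 0"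
        proof -
          fix k u v assume k: "k \<in> K" and u: "u \<in> emb ` cl k" and v: "v \<in> emb ` cl k" and uv: "u \<noteq> v"
          obtain x y where xy: "x \<in> cl k" "y \<in> cl k" "u = emb x" "v = emb y" using u v by auto
          then have "x \<noteq> y" using uv by auto
          then have "rin n x y = 0" using cv(2) k xy unfolding orthset_def by auto
          then have "orth_edge u v" using uv xy key unfolding orth_edge_def corth_def by simp
          moreover have "u \<in> S" "v \<in> S" using cv(2) k xy unfolding S_def by auto
          ultimately show "X u v = 0" using X(4) by blast
        qed
        show "\<And>u. u \<in> S \<Longrightarrow> (\<Sum>k\<in>{k \<in> K. u \<in> emb ` cl k}. wt k) = 1"
        proof -
          fix u assume "u \<in> S"
          then obtain x where x: "x \<in> A" "u = emb x" unfolding S_def by auto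
          have "{k \<in> K. u \<in> emb ` cl k} = {k \<in> K. x \<in> cl k}"
            using x cv(2) emb_eq by blast
          then show "(\<Sum>k\<in>{k \<in> K. u \<in> emb ` cl k}. wt k) = 1" using cv(3) x by simp
        qed
        show "\<And>k. k \<in> K \<Longrightarrow> 0 \<le> wt k" using cv(2) by auto
        show "(\<Sum>k\<in>K. wt k) = W" by (rule cv(4))
        show "0 < W" by (rule Wpos)
        show "\<And>z. 0 \<le> (\<Sum>i\<in>S. \<Sum>j\<in>S. z i * X i j * z j)" using X(2) by blast
        show "(\<Sum>i\<in>S. X i i) = 1" by (rule X(3))
      qed
      then show ?thesis using X(1) by simp
    qed
    define N where "N = real (card S)"
    define X0 where "X0 u v = (Re (cinner u v))^2 / N" for u v :: "complex ^ 'n"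
    have X0e: "X0 (emb x) (emb y) = (rin n x y)^2 / N" for x y unfolding X0_def key by simp
    have sumS: "(\<Sum>u\<in>S. \<Sum>v\<in>S. h u v) = (\<Sum>x\<in>A. \<Sum>y\<in>A. h (emb x) (emb y))" for h :: "_ \<Rightarrow> _ \<Rightarrow> real"
      unfolding S_def by (simp add: sum.reindex[OF inj])
    have rin_sym: "rin n x y = rin n y x" for x y unfolding rin_def by (simp add: mult.commute)
    have "W \<in> ?Xi"
    proof -
      have sym: "\<forall>i\<in>S. \<forall>j\<in>S. X0 i j = X0 j i"
        unfolding S_def using X0e rin_sym by auto
      have psd: "\<forall>z. (\<Sum>i\<in>S. \<Sum>j\<in>S. z i * X0 i j * z j) \<ge> 0"
      proof
        fix z :: "complex ^ 'n \<Rightarrow> real"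
        have "(\<Sum>i\<in>S. \<Sum>j\<in>S. z i * X0 i j * z j) = (\<Sum>x\<in>A. \<Sum>y\<in>A. z (emb x) * ((rin n x y)^2 / N) * z (emb y))"
          using sumS X0e by simp
        also have "\<dots> = (\<Sum>x\<in>A. \<Sum>y\<in>A. z (emb x) * (rin n x y)^2 * z (emb y)) / N"
          by (simp add: sum_divide_distrib)
        also have "\<dots> = (\<Sum>i<n. \<Sum>j<n. (\<Sum>x\<in>A. z (emb x) * x i * x j)^2) / N"
          using sos_identity[OF finA, of "\<lambda>x. z (emb x)" n] by simp
        also have "\<dots> \<ge> 0" unfolding N_def by (intro divide_nonneg_nonneg sum_nonneg) auto
        finally show "(\<Sum>i\<in>S. \<Sum>j\<in>S. z i * X0 i j * z j) \<ge> 0" .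
      qed
      have trace: "(\<Sum>i\<in>S. X0 i i) = 1"
      proof -
        have "(\<Sum>i\<in>S. X0 i i) = (\<Sum>i\<in>S. 1 / N)"
          unfolding S_def using X0e good_unit[OF gA] by (intro sum.cong) auto
        then show ?thesis using Npos unfolding N_def by simp
      qed
      have edges: "\<forall>i\<in>S. \<forall>j\<in>S. orth_edge i j \<longrightarrow> X0 i j = 0"
        unfolding X0_def orth_edge_def corth_def by simp
      have val: "(\<Sum>i\<in>S. \<Sum>j\<in>S. X0 i j) = W"
      proof -
        have "(\<Sum>i\<in>S. \<Sum>j\<in>S. X0 i j) = (\<Sum>x\<in>A. \<Sum>y\<in>A. 1 * (rin n x y)^2 * 1) / N"
          using sumS X0e by (simp add: sum_divide_distrib)
        also have "\<dots> = (\<Sum>i<n. \<Sum>j<n. (\<Sum>x\<in>A. 1 * x i * x j)^2) / N"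
          using sos_identity[OF finA, of "\<lambda>x. 1" n] by simp
        also have "\<dots> = (\<Sum>i<n. \<Sum>j<n. (if i = j then W^2 else 0)) / N"
          using fA unfolding frame_def by (intro arg_cong[where f = "\<lambda>t. t / N"] sum.cong refl) auto
        also have "\<dots> = (real n * W^2) / N" by simp
        also have "\<dots> = W" unfolding N_def using cardS Wpos cardn Npos N_def zero_less_card_finite[where 'a='n]
          by (simp add: power2_eq_square field_simps)
        finally show ?thesis .
      qed
      show ?thesis using sym psd trace edges val by blast
    qed
    then show ?thesis unfolding lovasz_theta_def using upper by (intro cSup_eq_maximum) auto
  qed
  show ?thesis using ks dp cardS th alS unfolding KS_proof_def by blast
qed

lemma pow_big: "17 \<le> k \<Longrightarrow> k + 30 \<le> (2::nat)^k"
proof (induction k rule: dec_induct)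
  case base
  then show ?case by simp
next
  case (step k)
  then show ?case by simp
qed

theorem mainTheorem1:
  fixes n k :: nat
  assumes "CARD('n) = n" and "n = 2 ^ k" and "n \<ge> 2 ^ 17"
  shows "\<exists>S :: (complex ^ 'n) set.
           KS_proof S \<and> distinct_projectors S
         \<and> real (card S) = 2 ^ (n - 1) + real n ^ 2 / 2
         \<and> lovasz_theta S orth_edge = 2 ^ (n - 1) / real n + real n / 2
         \<and> real (indep_number S orth_edge)
             \<le> (1 / 2 + 8 * sqrt (real n) * log 2 (real n) / (real n - 1))
                * (2 ^ (n - 1) / real n + real n / 2)"
proof -
  have k17: "17 \<le> k" using assms(2,3) by (metis power_le_imp_le_exp one_less_numeral_iff semiring_norm(76))
  have big: "k + 30 \<le> n" using pow_big[OF k17] assms(2) by simp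
  define hm :: nat where "hm = 2^(k-17)"
  have hm: "0 < hm" unfolding hm_def by simp
  define D :: nat where "D = 4^8 * hm"
  have Dn: "D * 2 = n"
  proof -
    have "D * 2 = 2^16 * 2^(k-17) * 2" unfolding D_def hm_def by simp
    also have "\<dots> = 2^(16 + (k - 17) + 1)" by (simp add: power_add)
    also have "16 + (k - 17) + 1 = k" using k17 by simp
    finally show ?thesis using assms(2) by simp
  qed
  define Wn :: nat where "Wn = 2^(n-1-k) + 2^(k-1)"
  define q where "q = Wn div 9^8"
  define r where "r = Wn mod 9^8"
  define a where "a = 2^8 * q"
  have Wqr: "Wn = 9^8 * q + r" unfolding q_def r_def by simp
  have r_lt: "r < 9^8" unfolding r_def by simp
  have "(2::nat)^29 \<le> 2^(n-1-k)" using big by (intro power_increasing) auto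
  then have "5 * 9^8 \<le> Wn" unfolding Wn_def by simp
  then have "5 * 9^8 div 9^8 \<le> Wn div 9^8" by (rule div_le_mono)
  then have q5: "5 \<le> q" unfolding q_def by simp
  have a: "0 < a" unfolding a_def using q5 by simp
  define W :: real where "W = (9/2)^8 * real a + real r"
  have c98: "(9/2::real)^8 * 256 = 43046721" by (simp add: power_divide)
  have Wq: "W = 9^8 * real q + real r" unfolding W_def a_def using c98 by simp
  have Wpos: "0 < W" using Wq q5 by simp
  have npos: "0 < real n" using big by simp
  have Wval: "W = 2 ^ (n - 1) / real n + real n / 2"
  proof -
    have "W = real Wn" using Wq Wqr by simp
    also have "\<dots> = 2^(n-1-k) + 2^(k-1)" unfolding Wn_def by simp
    also have "(2::real)^(n-1-k) = 2^(n-1) / real n"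
    proof -
      have "(2::real)^(n-1) = 2^(n-1-k) * 2^k" using big by (simp add: power_add[symmetric])
      then show ?thesis using assms(2) by simp
    qed
    also have "(2::real)^(k-1) = real n / 2"
    proof -
      obtain j where kj: "k = Suc j" using k17 by (cases k) auto
      have "(2::real)^k = 2^(k-1) * 2" unfolding kj by simp
      then show ?thesis using assms(2) by simp
    qed
    finally show ?thesis .
  qed
  define Ar where "Ar = tset 2 (tset hm (Tp 8) (Eset hm)) (Pset {..<a}) \<union> tset 2 (Eset D) (Pset {a..<a+r})"
  have RC: "good (D*2) Ar \<and> frame (D*2) Ar W \<and> cover (D*2) Ar W
     \<and> KSp (D*2) Ar \<and> alpha_le (D*2) Ar (4^8 * a + r)"
    using real_construction[OF hm a, of r] unfolding Ar_def D_def W_def by simp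
  then have RC': "good n Ar" "frame n Ar W" "cover n Ar W" "KSp n Ar" "alpha_le n Ar (4^8 * a + r)"
    unfolding Dn by auto
  obtain S :: "(complex ^ 'n) set" where S: "KS_proof S" "distinct_projectors S" "real (card S) = W * real n"
    "lovasz_theta S orth_edge = W" "indep_number S orth_edge \<le> 4^8 * a + r"
    using transport[OF assms(1) RC' Wpos] by blast
  have card: "real (card S) = 2 ^ (n - 1) + real n ^ 2 / 2"
  proof -
    have "real (card S) = (2 ^ (n - 1) / real n + real n / 2) * real n" using S(3) Wval by simp
    also have "\<dots> = 2 ^ (n - 1) / real n * real n + real n / 2 * real n" by (rule distrib_right)
    also have "2 ^ (n - 1) / real n * real n = 2 ^ (n - 1)" using npos by simp
    also have "real n / 2 * real n = real n ^ 2 / 2" by (simp add: power2_eq_square)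
    finally show ?thesis .
  qed
  have nat_ineq: "2 * (4^8 * a + r) \<le> 9^8 * q + r" unfolding a_def using q5 r_lt by simp
  have al1: "real (indep_number S orth_edge) \<le> W / 2"
  proof -
    have "real (indep_number S orth_edge) \<le> real (4^8 * a + r)" using S(5) by linarith
    also have "\<dots> \<le> W / 2"
    proof -
      have "real (2 * (4^8 * a + r)) \<le> real (9^8 * q + r)" using nat_ineq by linarith
      then show ?thesis using Wq by simp
    qed
    finally show ?thesis .
  qed
  have eps: "0 \<le> 8 * sqrt (real n) * log 2 (real n) / (real n - 1)"
  proof -
    have "1 \<le> real n" using big by simp
    then have "0 \<le> log 2 (real n)" by simp
    moreover have "0 \<le> real n - 1" using big by simp
    ultimately show ?thesis by simp
  qed
  have eW: "0 \<le> (8 * sqrt (real n) * log 2 (real n) / (real n - 1)) * W"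
    using eps Wpos by (intro mult_nonneg_nonneg) auto
  have "W / 2 \<le> (1 / 2 + 8 * sqrt (real n) * log 2 (real n) / (real n - 1)) * W"
    unfolding distrib_right using eW by linarith
  then have al: "real (indep_number S orth_edge) \<le> (1 / 2 + 8 * sqrt (real n) * log 2 (real n) / (real n - 1))
                * (2 ^ (n - 1) / real n + real n / 2)"
    using al1 Wval by simp
  show ?thesis using S(1,2,4) card al Wval by auto
qed

end
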